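(* Consider the mediated advertising market described in the context, with publicly known advertiser capacities, and let $\gamma \ge 1$ be a number known to the mechanism such that $u(a) \le \gamma$ for every advertiser $a$ and $|P(m)| \le \gamma$ for every mediator $m$. Let $\tau = |S_c(P,B)|$. Then the Price by Removal Mechanism (PRM) is budget balanced, individually rational, incentive compatible, and $\left(1 - \frac{5\gamma}{\tau}\right)$-competitive.
   Context: Market model. There is a finite set $P$ of users, a finite set $M$ of mediators and a finite set $A$ of advertisers. Each user $p$ has a cost $c(p)\ge 0$. The sets $P(m)$, $m\in M$, form a partition of $P$ ($P(m)$ is the set of users of mediator $m$). Each advertiser $a$ has a positive integer capacity $u(a)$ and a value $v(a)\ge 0$. To each advertiser $a$ associate a set $B(a)$ of $u(a)$ slots, each slot $b\in B(a)$ having value $v(b)=v(a)$; $B=\bigcup_a B(a)$. For $A'\subseteq A$, $B(A')=\bigcup_{a\in A'}B(a)$; for $M'\subseteq M$, $P(M')=\bigcup_{m\in M'}P(m)$. An assignment is a set $S\subseteq P\times B$ in which every user and every slot appears in at most one pair; its gain from trade is $\mathrm{GfT}(S)=\sum_{(p,b)\in S}[v(b)-c(p)]$. If mediator $m$ receives total payment $t$, his utility is $t-\sum_{p\in P(m)\text{ assigned}}c(p)$; if advertiser $a$ is assigned $n\le u(a)$ users and pays $t$, her utility is $n\,v(a)-t$. Mechanisms and reports. The mechanism knows $M$ and $A$ but not their parameters. In this setting the capacities $u(a)$ are public; each advertiser reports a value, and each mediator reports any subset of his users together with an arbitrary cost for each reported user (and an order on them used for tie-breaking). Truthful means reporting the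 true value (advertiser) or the true set of users and their true costs (mediator). The mechanism outputs an assignment, charges advertisers and pays mediators. It is incentive compatible (IC) if truthfulness is a (weakly) dominant strategy for every advertiser and every mediator; individually rational (IR) if every truthful participant has non-negative utility; budget balanced (BB) if the total amount charged to advertisers is at least the total amount paid to mediators. It is $r$-competitive if, when all players are truthful, the gain from trade of its output is at least $r$ times the maximum gain from trade over all assignments. Tie-breaking. A fixed order $\sigma$ on mediators and advertisers, chosen independently of the reports, is used to break ties when comparing (equal as numbers) costs and values of users/slots of different players (e.g., among slots of different advertisers with equal value, the slot of the advertiser earlier in $\sigma$ is considered larger); ties among users of the same mediator are broken by the order induced by his report, and ties among slots of one advertiser arbitrarily. Thus all costs and values compared are distinct, and unless stated otherwise comparisons use this rule. Canonical assignment. For $P'\subseteq P$, $B'\subseteq B$, order the slots of $B'$ by decreasing value $b_1,b_2,\dots$ and the users of $P'$ by increasing cost $p_1,p_2,\dots$; for $1\le i\le\min\{|B'|,|P'|\}$, $S_c(P',B')$ contains $(p_i,b_i)$ iff $v(b_i)>c(p_i)$. The user (slot) "at location $i$" of $S_c(P',B')$ is $p_i$ ($b_i$). PRM (all quantities computed from reports): (1) For each mediator $m$, if $|S_c(P\setminus P(m),B)|>4\gamma$, let $p_m$ be the user at location $|S_c(P\setminus P(m),B)|-4\gamma$ of $S_c(P\setminus P(m),B)$ and $c_m=c(p_m)$; otherwise $c_m=-\infty$. (2) Let $\hat P(m)$ be the set of users of $m$ whose cost is less than $c_m$. (3) Run a VCG auction in which the items are the users of $\bigcup_m\hat P(m)$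 and the bidders are the advertisers of $A$ (advertiser $a$ has value $v(a)$ for each of up to $u(a)$ items) plus a dummy advertiser $a_d$ with value $\max_m c_m$ and capacity $\sum_m|\hat P(m)|$. (4) Charge each non-dummy advertiser her VCG payment. (5) For each user $p$ assigned by the VCG auction, pay $c_m$ to the mediator $m$ of $p$. *)

theory Defs
  imports Complex_Main
begin

text \<open>The slot B(a) of an advertiser a
  consists of the pairs (a,i) with i < u(a).  The tie-breaking order sigma on mediators and
  advertisers is given by an injective rank (smaller rank = earlier in sigma).\<close>

record ('u,'m,'a) mkt =
  Us  :: "'u set"
  Ms  :: "'m set"
  As  :: "'a set"
  med :: "'u \<Rightarrow> 'm"        \<comment> \<open>the mediator owning a user (gives the partition P(m))\<close>
  cap :: "'a \<Rightarrow> nat"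
  rnk :: "'m + 'a \<Rightarrow> nat"
  gam :: nat

definition wf_mkt :: "('u,'m,'a) mkt \<Rightarrow> bool" where
  "wf_mkt K \<longleftrightarrow> finite (Us K) \<and> finite (Ms K) \<and> finite (As K) \<and>
     (\<forall>p\<in>Us K. med K p \<in> Ms K) \<and> (\<forall>a\<in>As K. 1 \<le> cap K a) \<and>
     inj_on (rnk K) (Ms K <+> As K)"

definition usersof :: "('u,'m,'a) mkt \<Rightarrow> 'm \<Rightarrow> 'u set" where
  "usersof K m = {p \<in> Us K. med K p = m}"

definition slots :: "('u,'m,'a) mkt \<Rightarrow> 'a set \<Rightarrow> ('a \<times> nat) set" where
  "slots K A' = {(a,i). a \<in> A' \<and> i < cap K a}"

text \<open>A report profile: reported advertiser values, the set of reported users (the union of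
  the subsets reported by the mediators), their reported costs, and a tie-breaking key
  (the order each mediator reports on his own users; smaller key = earlier).\<close>

record ('u,'a) prof =
  rv :: "'a \<Rightarrow> real"
  rP :: "'u set"
  rc :: "'u \<Rightarrow> real"
  rk :: "'u \<Rightarrow> nat"

definition valid_prof :: "('u,'m,'a) mkt \<Rightarrow> ('u,'a) prof \<Rightarrow> bool" where
  "valid_prof K pr \<longleftrightarrow> (\<forall>a\<in>As K. 0 \<le> rv pr a) \<and> rP pr \<subseteq> Us K \<and>
     (\<forall>p\<in>rP pr. 0 \<le> rc pr p) \<and>
     (\<forall>m\<in>Ms K. inj_on (rk pr) (rP pr \<inter> usersof K m))"

section \<open>Tie-broken comparisons (earlier player in sigma = larger)\<close>

definition user_less :: "('u,'m,'a) mkt \<Rightarrow> ('u,'a) prof \<Rightarrow> 'u \<Rightarrow> 'u \<Rightarrow> bool" where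
  "user_less K pr p q \<longleftrightarrow> rc pr p < rc pr q \<or>
     (rc pr p = rc pr q \<and>
       ((med K p \<noteq> med K q \<and> rnk K (Inl (med K q)) < rnk K (Inl (med K p))) \<or>
        (med K p = med K q \<and> rk pr p < rk pr q)))"

fun slot_gt :: "('u,'m,'a) mkt \<Rightarrow> ('u,'a) prof \<Rightarrow> 'a \<times> nat \<Rightarrow> 'a \<times> nat \<Rightarrow> bool" where
  "slot_gt K pr (a,i) (b,j) \<longleftrightarrow> rv pr a > rv pr b \<or>
     (rv pr a = rv pr b \<and> ((a \<noteq> b \<and> rnk K (Inr a) < rnk K (Inr b)) \<or> (a = b \<and> i < j)))"

fun slot_beats_user :: "('u,'m,'a) mkt \<Rightarrow> ('u,'a) prof \<Rightarrow> 'a \<times> nat \<Rightarrow> 'u \<Rightarrow> bool" where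
  "slot_beats_user K pr (a,i) p \<longleftrightarrow> rv pr a > rc pr p \<or>
     (rv pr a = rc pr p \<and> rnk K (Inr a) < rnk K (Inl (med K p)))"

text \<open>0-based positions: users by increasing cost, slots by decreasing value.\<close>

definition upos :: "('u,'m,'a) mkt \<Rightarrow> ('u,'a) prof \<Rightarrow> 'u set \<Rightarrow> 'u \<Rightarrow> nat" where
  "upos K pr P' p = card {q \<in> P'. user_less K pr q p}"

definition spos :: "('u,'m,'a) mkt \<Rightarrow> ('u,'a) prof \<Rightarrow> ('a \<times> nat) set \<Rightarrow> 'a \<times> nat \<Rightarrow> nat" where
  "spos K pr B' b = card {b' \<in> B'. slot_gt K pr b' b}"

text \<open>The canonical assignment S_c(P',B').\<close>

definition canon :: "('u,'m,'a) mkt \<Rightarrow> ('u,'a) prof \<Rightarrow> 'u set \<Rightarrow> ('a \<times> nat) set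
    \<Rightarrow> ('u \<times> ('a \<times> nat)) set" where
  "canon K pr P' B' = {(p,b). p \<in> P' \<and> b \<in> B' \<and> upos K pr P' p = spos K pr B' b \<and>
                               slot_beats_user K pr b p}"

text \<open>The user p_m (None encodes c_m = -infinity).  Location i (1-based) is position i-1.\<close>

definition pm :: "('u,'m,'a) mkt \<Rightarrow> ('u,'a) prof \<Rightarrow> 'm \<Rightarrow> 'u option" where
  "pm K pr m =
    (let P' = rP pr - usersof K m; L = card (canon K pr P' (slots K (As K))) in
     if L > 4 * gam K then Some (THE p. p \<in> P' \<and> upos K pr P' p = L - 4 * gam K - 1)
     else None)"

definition cm :: "('u,'m,'a) mkt \<Rightarrow> ('u,'a) prof \<Rightarrow> 'm \<Rightarrow> real option" where
  "cm K pr m = map_option (rc pr) (pm K pr m)"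

definition hatP :: "('u,'m,'a) mkt \<Rightarrow> ('u,'a) prof \<Rightarrow> 'm \<Rightarrow> 'u set" where
  "hatP K pr m = (case pm K pr m of None \<Rightarrow> {}
      | Some q \<Rightarrow> {p \<in> rP pr \<inter> usersof K m. user_less K pr p q})"

definition items :: "('u,'m,'a) mkt \<Rightarrow> ('u,'a) prof \<Rightarrow> 'u set" where
  "items K pr = (\<Union>m\<in>Ms K. hatP K pr m)"

definition nitems :: "('u,'m,'a) mkt \<Rightarrow> ('u,'a) prof \<Rightarrow> nat" where
  "nitems K pr = card (items K pr)"

text \<open>Value of the dummy advertiser: max of the finite c_m (irrelevant if there are no items).\<close>

definition dval :: "('u,'m,'a) mkt \<Rightarrow> ('u,'a) prof \<Rightarrow> real" where
  "dval K pr = Max {x. \<exists>m\<in>Ms K. cm K pr m = Some x}"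

text \<open>Bidder units in the VCG auction: real slots and the dummy's units.\<close>

datatype 'a vslot = RS "'a \<times> nat" | DS nat

fun vval :: "('u,'m,'a) mkt \<Rightarrow> ('u,'a) prof \<Rightarrow> 'a vslot \<Rightarrow> real" where
  "vval K pr (RS (a,i)) = rv pr a"
| "vval K pr (DS j) = dval K pr"

text \<open>Tie-breaking in the VCG auction: as before between real slots; a real slot beats a
  dummy unit of equal value (the dummy is last in sigma).\<close>

fun vtie :: "('u,'m,'a) mkt \<Rightarrow> 'a vslot \<Rightarrow> 'a vslot \<Rightarrow> bool" where
  "vtie K (RS (a,i)) (RS (b,j)) \<longleftrightarrow> (a \<noteq> b \<and> rnk K (Inr a) < rnk K (Inr b)) \<or> (a = b \<and> i < j)"
| "vtie K (RS x) (DS j) \<longleftrightarrow> True"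
| "vtie K (DS j) (RS x) \<longleftrightarrow> False"
| "vtie K (DS i) (DS j) \<longleftrightarrow> i < j"

definition vgt :: "('u,'m,'a) mkt \<Rightarrow> ('u,'a) prof \<Rightarrow> 'a vslot \<Rightarrow> 'a vslot \<Rightarrow> bool" where
  "vgt K pr x y \<longleftrightarrow> vval K pr x > vval K pr y \<or> (vval K pr x = vval K pr y \<and> vtie K x y)"

definition xall :: "('u,'m,'a) mkt \<Rightarrow> ('u,'a) prof \<Rightarrow> 'a vslot set" where
  "xall K pr = RS ` slots K (As K) \<union> DS ` {..<nitems K pr}"

definition vpos :: "('u,'m,'a) mkt \<Rightarrow> ('u,'a) prof \<Rightarrow> 'a vslot \<Rightarrow> nat" where
  "vpos K pr x = card {y \<in> xall K pr. vgt K pr y x}"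

definition winners :: "('u,'m,'a) mkt \<Rightarrow> ('u,'a) prof \<Rightarrow> 'a vslot set" where
  "winners K pr = {x \<in> xall K pr. vpos K pr x < nitems K pr}"

definition optw :: "('u,'m,'a) mkt \<Rightarrow> ('u,'a) prof \<Rightarrow> 'a vslot set \<Rightarrow> real" where
  "optw K pr Y = Max ((\<lambda>Z. \<Sum>z\<in>Z. vval K pr z) ` {Z. Z \<subseteq> Y \<and> card Z \<le> nitems K pr})"

definition nwin :: "('u,'m,'a) mkt \<Rightarrow> ('u,'a) prof \<Rightarrow> 'a \<Rightarrow> nat" where
  "nwin K pr a = card {i. RS (a,i) \<in> winners K pr}"

text \<open>VCG (Clarke pivot) payment of a real advertiser.\<close>

definition charge :: "('u,'m,'a) mkt \<Rightarrow> ('u,'a) prof \<Rightarrow> 'a \<Rightarrow> real" where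
  "charge K pr a = optw K pr (xall K pr - RS ` slots K {a})
                   - (optw K pr (xall K pr) - real (nwin K pr a) * rv pr a)"

definition assign :: "('u,'m,'a) mkt \<Rightarrow> ('u,'a) prof \<Rightarrow> ('u \<times> ('a \<times> nat)) set" where
  "assign K pr = {(p,b). p \<in> items K pr \<and> RS b \<in> winners K pr \<and>
                         upos K pr (items K pr) p = vpos K pr (RS b)}"

definition assigned_users :: "('u,'m,'a) mkt \<Rightarrow> ('u,'a) prof \<Rightarrow> 'm \<Rightarrow> 'u set" where
  "assigned_users K pr m = usersof K m \<inter> fst ` assign K pr"

definition pay :: "('u,'m,'a) mkt \<Rightarrow> ('u,'a) prof \<Rightarrow> 'm \<Rightarrow> real" where
  "pay K pr m = (case cm K pr m of None \<Rightarrow> 0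
                   | Some x \<Rightarrow> x * real (card (assigned_users K pr m)))"

definition med_util :: "('u,'m,'a) mkt \<Rightarrow> ('u \<Rightarrow> real) \<Rightarrow> ('u,'a) prof \<Rightarrow> 'm \<Rightarrow> real" where
  "med_util K c pr m = pay K pr m - (\<Sum>p\<in>assigned_users K pr m. c p)"

definition adv_util :: "('u,'m,'a) mkt \<Rightarrow> ('a \<Rightarrow> real) \<Rightarrow> ('u,'a) prof \<Rightarrow> 'a \<Rightarrow> real" where
  "adv_util K v pr a =
     real (card {x \<in> assign K pr. fst (snd x) = a}) * v a - charge K pr a"

definition truthful_med :: "('u,'m,'a) mkt \<Rightarrow> ('u \<Rightarrow> real) \<Rightarrow> ('u,'a) prof \<Rightarrow> 'm \<Rightarrow> bool" where
  "truthful_med K c pr m \<longleftrightarrow> rP pr \<inter> usersof K m = usersof K m \<and>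
     (\<forall>p\<in>usersof K m. rc pr p = c p)"

definition truthful_adv :: "('a \<Rightarrow> real) \<Rightarrow> ('u,'a) prof \<Rightarrow> 'a \<Rightarrow> bool" where
  "truthful_adv v pr a \<longleftrightarrow> rv pr a = v a"

definition others_same_med :: "('u,'m,'a) mkt \<Rightarrow> ('u,'a) prof \<Rightarrow> ('u,'a) prof \<Rightarrow> 'm \<Rightarrow> bool" where
  "others_same_med K pr pr' m \<longleftrightarrow> rv pr' = rv pr \<and>
     (\<forall>p\<in>Us K. med K p \<noteq> m \<longrightarrow> (p \<in> rP pr' \<longleftrightarrow> p \<in> rP pr) \<and>
        (p \<in> rP pr \<longrightarrow> rc pr' p = rc pr p \<and> rk pr' p = rk pr p))"

definition others_same_adv :: "('u,'a) prof \<Rightarrow> ('u,'a) prof \<Rightarrow> 'a \<Rightarrow> bool" where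
  "others_same_adv pr pr' a \<longleftrightarrow> rP pr' = rP pr \<and> rc pr' = rc pr \<and> rk pr' = rk pr \<and>
     (\<forall>b. b \<noteq> a \<longrightarrow> rv pr' b = rv pr b)"

definition is_assignment :: "('u,'m,'a) mkt \<Rightarrow> ('u \<times> ('a \<times> nat)) set \<Rightarrow> bool" where
  "is_assignment K S \<longleftrightarrow> S \<subseteq> Us K \<times> slots K (As K) \<and>
     (\<forall>x\<in>S. \<forall>y\<in>S. (fst x = fst y \<longrightarrow> x = y) \<and> (snd x = snd y \<longrightarrow> x = y))"

definition gft :: "('u \<Rightarrow> real) \<Rightarrow> ('a \<Rightarrow> real) \<Rightarrow> ('u \<times> ('a \<times> nat)) set \<Rightarrow> real" where
  "gft c v S = (\<Sum>x\<in>S. v (fst (snd x)) - c (fst x))"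

definition opt_gft :: "('u,'m,'a) mkt \<Rightarrow> ('u \<Rightarrow> real) \<Rightarrow> ('a \<Rightarrow> real) \<Rightarrow> real" where
  "opt_gft K c v = Max (gft c v ` {S. is_assignment K S})"

definition budget_balanced where
  "budget_balanced K \<longleftrightarrow> (\<forall>pr. valid_prof K pr \<longrightarrow>
     (\<Sum>m\<in>Ms K. pay K pr m) \<le> (\<Sum>a\<in>As K. charge K pr a))"

definition individually_rational where
  "individually_rational K c v \<longleftrightarrow>
     (\<forall>pr a. valid_prof K pr \<and> a \<in> As K \<and> truthful_adv v pr a \<longrightarrow> 0 \<le> adv_util K v pr a) \<and>
     (\<forall>pr m. valid_prof K pr \<and> m \<in> Ms K \<and> truthful_med K c pr m \<longrightarrow> 0 \<le> med_util K c pr m)"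

definition incentive_compatible where
  "incentive_compatible K c v \<longleftrightarrow>
     (\<forall>pr pr' a. valid_prof K pr \<and> valid_prof K pr' \<and> a \<in> As K \<and> truthful_adv v pr a \<and>
        others_same_adv pr pr' a \<longrightarrow> adv_util K v pr' a \<le> adv_util K v pr a) \<and>
     (\<forall>pr pr' m. valid_prof K pr \<and> valid_prof K pr' \<and> m \<in> Ms K \<and> truthful_med K c pr m \<and>
        others_same_med K pr pr' m \<longrightarrow> med_util K c pr' m \<le> med_util K c pr m)"

definition competitive where
  "competitive K c v r \<longleftrightarrow> (\<forall>pr. valid_prof K pr \<and> (\<forall>m\<in>Ms K. truthful_med K c pr m) \<and>
     (\<forall>a\<in>As K. truthful_adv v pr a) \<longrightarrow> r pr * opt_gft K c v \<le> gft c v (assign K pr))"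

end

theory Submission
  imports Defs "HOL-Library.Product_Lexorder"
begin

definition rnkf :: "('x \<Rightarrow> 'k::linorder) \<Rightarrow> 'x set \<Rightarrow> 'x \<Rightarrow> nat" where
  "rnkf f S x = card {y\<in>S. f y < f x}"

lemma rnkf_less:
  assumes "finite S" "x \<in> S" "y \<in> S" "f x < f y"
  shows "rnkf f S x < rnkf f S y"
proof -
  have "{z\<in>S. f z < f x} \<subset> {z\<in>S. f z < f y}" using assms by auto
  then show ?thesis unfolding rnkf_def by (intro psubset_card_mono) (use assms in auto)
qed

lemma rnkf_le:
  assumes "finite S" "f x \<le> f y"
  shows "rnkf f S x \<le> rnkf f S y"
  unfolding rnkf_def using assms by (intro card_mono) auto

lemma rnkf_less_iff:
  assumes "finite S" "inj_on f S" "x \<in> S" "y \<in> S"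
  shows "rnkf f S x < rnkf f S y \<longleftrightarrow> f x < f y"
proof
  assume h: "rnkf f S x < rnkf f S y"
  show "f x < f y"
  proof (rule ccontr)
    assume "\<not> f x < f y"
    then have "f y \<le> f x" by simp
    then have "rnkf f S y \<le> rnkf f S x" by (rule rnkf_le[OF assms(1)])
    with h show False by simp
  qed
qed (rule rnkf_less[OF assms(1,3,4)])

lemma rnkf_eq_iff:
  assumes "finite S" "inj_on f S" "x \<in> S" "y \<in> S"
  shows "rnkf f S x = rnkf f S y \<longleftrightarrow> x = y"
proof
  assume h: "rnkf f S x = rnkf f S y"
  show "x = y"
  proof (rule ccontr)
    assume "x \<noteq> y"
    then have "f x \<noteq> f y" using assms inj_onD by metis
    then have "f x < f y \<or> f y < f x" by auto
    then show False using rnkf_less[OF assms(1,3,4), of f] rnkf_less[OF assms(1,4,3), of f] h by auto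
  qed
qed simp

lemma rnkf_inj: "finite S \<Longrightarrow> inj_on f S \<Longrightarrow> inj_on (rnkf f S) S"
  by (meson inj_onI rnkf_eq_iff)

lemma rnkf_lt_card:
  assumes "finite S" "x \<in> S"
  shows "rnkf f S x < card S"
proof -
  have "{y\<in>S. f y < f x} \<subset> S" using assms by auto
  then show ?thesis unfolding rnkf_def using assms psubset_card_mono by blast
qed

lemma rnkf_image:
  assumes "finite S" "inj_on f S"
  shows "rnkf f S ` S = {..<card S}"
proof -
  have "rnkf f S ` S \<subseteq> {..<card S}" using rnkf_lt_card assms by auto
  moreover have "card (rnkf f S ` S) = card S" using card_image rnkf_inj assms by blast
  ultimately show ?thesis by (simp add: card_subset_eq)
qed

lemma rnkf_ex:
  assumes "finite S" "inj_on f S" "i < card S"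
  shows "\<exists>x\<in>S. rnkf f S x = i"
  using rnkf_image[OF assms(1,2)] assms(3) by (metis imageE lessThan_iff)

lemma rnkf_ex1:
  assumes "finite S" "inj_on f S" "i < card S"
  shows "\<exists>!x. x\<in>S \<and> rnkf f S x = i"
  using rnkf_ex[OF assms] rnkf_eq_iff[OF assms(1,2)] by blast

lemma rnkf_sub_le:
  assumes "finite S" "T \<subseteq> S"
  shows "rnkf f T x \<le> rnkf f S x"
  unfolding rnkf_def using assms by (intro card_mono) auto

lemma rnkf_sub_ge:
  assumes "finite S" "T \<subseteq> S"
  shows "rnkf f S x \<le> rnkf f T x + card (S - T)"
proof -
  have "{y\<in>S. f y < f x} \<subseteq> {y\<in>T. f y < f x} \<union> (S - T)" using assms by auto
  then have "card {y\<in>S. f y < f x} \<le> card ({y\<in>T. f y < f x} \<union> (S - T))"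
    using assms by (intro card_mono) (auto intro: finite_subset)
  also have "\<dots> \<le> card {y\<in>T. f y < f x} + card (S - T)" by (rule card_Un_le)
  finally show ?thesis unfolding rnkf_def .
qed

lemma rnkf_prefix:
  assumes "T \<subseteq> S" "\<And>y. y \<in> S \<Longrightarrow> f y < f x \<Longrightarrow> y \<in> T"
  shows "rnkf f T x = rnkf f S x"
  unfolding rnkf_def using assms by (intro arg_cong[where f=card]) auto

lemma card_top:
  assumes "finite S" "inj_on f S" "k \<le> card S"
  shows "card {x\<in>S. rnkf f S x < k} = k"
proof -
  have "bij_betw (rnkf f S) {x\<in>S. rnkf f S x < k} {..<k}"
    unfolding bij_betw_def
  proof
    show "inj_on (rnkf f S) {x \<in> S. rnkf f S x < k}"
      using rnkf_inj[OF assms(1,2)] by (rule inj_on_subset) auto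
    show "rnkf f S ` {x \<in> S. rnkf f S x < k} = {..<k}"
    proof
      show "rnkf f S ` {x \<in> S. rnkf f S x < k} \<subseteq> {..<k}" by auto
      show "{..<k} \<subseteq> rnkf f S ` {x \<in> S. rnkf f S x < k}"
      proof
        fix i assume "i \<in> {..<k}"
        then have "i < card S" using assms by auto
        then obtain x where "x \<in> S" "rnkf f S x = i" using rnkf_ex assms by blast
        then show "i \<in> rnkf f S ` {x \<in> S. rnkf f S x < k}" using \<open>i\<in>{..<k}\<close> by force
      qed
    qed
  qed
  then show ?thesis using bij_betw_same_card by fastforce
qed

lemma top_sum:
  fixes w :: "'x \<Rightarrow> real"
  assumes fin: "finite S" and inj: "inj_on f S"
    and anti: "\<And>x y. x \<in> S \<Longrightarrow> y \<in> S \<Longrightarrow> f x < f y \<Longrightarrow> w y \<le> w x"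
    and Z: "Z \<subseteq> S" "card Z \<le> k" and k: "k \<le> card S"
    and alt: "card Z = k \<or> (\<forall>x\<in>S. 0 \<le> w x)"
  shows "sum w Z \<le> sum w {x\<in>S. rnkf f S x < k}"
proof -
  define T where "T = {x\<in>S. rnkf f S x < k}"
  have cT: "card T = k" unfolding T_def using card_top[OF fin inj k] .
  have finZ: "finite Z" using Z fin finite_subset by blast
  have finT: "finite T" unfolding T_def using fin by auto
  have c1: "card Z = card (Z \<inter> T) + card (Z - T)"
    using card_Int_Diff[OF finZ] .
  have c2: "card T = card (Z \<inter> T) + card (T - Z)"
    using card_Int_Diff[OF finT, of Z] by (simp add: inf_commute)
  have cle: "card (Z - T) \<le> card (T - Z)" using c1 c2 cT Z(2) by linarith
  obtain h where h: "h ` (Z - T) \<subseteq> T - Z" "inj_on h (Z - T)"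
    using card_le_inj[OF _ _ cle] finZ finT by blast
  have hw: "w z \<le> w (h z)" if "z \<in> Z - T" for z
  proof -
    have hz: "h z \<in> T" "h z \<in> S" using h that T_def by auto
    have "z \<in> S" using that Z by auto
    have "rnkf f S (h z) < k" "\<not> rnkf f S z < k" using hz that T_def \<open>z\<in>S\<close> by auto
    then have "rnkf f S (h z) < rnkf f S z" by simp
    then have "f (h z) < f z" using rnkf_less_iff[OF fin inj hz(2) \<open>z\<in>S\<close>] by simp
    then show ?thesis using anti[OF hz(2) \<open>z\<in>S\<close>] by simp
  qed
  have "sum w (Z - T) \<le> sum (w \<circ> h) (Z - T)" using hw by (intro sum_mono) auto
  also have "\<dots> = sum w (h ` (Z - T))" using sum.reindex[OF h(2), of w] by simp
  also have "\<dots> \<le> sum w (T - Z)"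
  proof (cases "card Z = k")
    case True
    then have "card (h ` (Z - T)) = card (T - Z)"
      using card_image[OF h(2)] c1 c2 cT by simp
    then have "h ` (Z - T) = T - Z" using h(1) finT by (simp add: card_subset_eq)
    then show ?thesis by simp
  next
    case False
    then have nn: "\<forall>x\<in>S. 0 \<le> w x" using alt by simp
    show ?thesis using h(1) finT nn T_def by (intro sum_mono2) auto
  qed
  finally have "sum w (Z - T) \<le> sum w (T - Z)" .
  moreover have "sum w Z = sum w (Z \<inter> T) + sum w (Z - T)"
    using finZ by (metis sum.Int_Diff)
  moreover have "sum w T = sum w (Z \<inter> T) + sum w (T - Z)"
    using finT sum.Int_Diff[OF finT, of w Z] by (simp add: Int_commute)
  ultimately show ?thesis unfolding T_def[symmetric] by linarith
qed

lemma finite_slots: "finite A' \<Longrightarrow> finite (slots K A')"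
proof -
  assume "finite A'"
  have "slots K A' = (\<Union>a\<in>A'. {a} \<times> {..<cap K a})" unfolding slots_def by auto
  then show ?thesis using \<open>finite A'\<close> by auto
qed

locale mk =
  fixes K :: "('u,'m,'a) mkt"
  assumes wf: "wf_mkt K" and g1: "1 \<le> gam K"
    and capg: "\<forall>a\<in>As K. cap K a \<le> gam K"
    and usg: "\<forall>m\<in>Ms K. card (usersof K m) \<le> gam K"
begin

abbreviation "SL \<equiv> slots K (As K)"
abbreviation "g \<equiv> gam K"

lemma finU: "finite (Us K)" and finM: "finite (Ms K)" and finA: "finite (As K)"
  and medM: "p \<in> Us K \<Longrightarrow> med K p \<in> Ms K" and cap1: "a \<in> As K \<Longrightarrow> 1 \<le> cap K a"
  using wf unfolding wf_mkt_def by auto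

lemma finSL: "finite SL" using finite_slots finA by blast

lemma inl_inj: "m \<in> Ms K \<Longrightarrow> m' \<in> Ms K \<Longrightarrow> rnk K (Inl m) = rnk K (Inl m') \<Longrightarrow> m = m'"
  using wf unfolding wf_mkt_def inj_on_def by auto

lemma inr_inj: "a \<in> As K \<Longrightarrow> a' \<in> As K \<Longrightarrow> rnk K (Inr a) = rnk K (Inr a') \<Longrightarrow> a = a'"
  using wf unfolding wf_mkt_def inj_on_def by auto

lemma inl_inr: "m \<in> Ms K \<Longrightarrow> a \<in> As K \<Longrightarrow> rnk K (Inl m) \<noteq> rnk K (Inr a)"
  using wf unfolding wf_mkt_def inj_on_def by fastforce

lemma SL_iff: "b \<in> SL \<longleftrightarrow> fst b \<in> As K \<and> snd b < cap K (fst b)"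
  unfolding slots_def by (cases b) auto

lemma usersof_sub: "usersof K m \<subseteq> Us K" unfolding usersof_def by auto
lemma fin_usersof: "finite (usersof K m)" using finU usersof_sub finite_subset by blast

definition ukey :: "('u,'a) prof \<Rightarrow> 'u \<Rightarrow> real \<times> int \<times> nat" where
  "ukey pr p = (rc pr p, - int (rnk K (Inl (med K p))), rk pr p)"

definition skey :: "('u,'a) prof \<Rightarrow> 'a \<times> nat \<Rightarrow> real \<times> nat \<times> nat" where
  "skey pr b = (- rv pr (fst b), rnk K (Inr (fst b)), snd b)"

definition vkey :: "('u,'a) prof \<Rightarrow> 'a vslot \<Rightarrow> real \<times> nat \<times> nat \<times> nat" where
  "vkey pr x = (case x of RS b \<Rightarrow> (- rv pr (fst b), 0, rnk K (Inr (fst b)), snd b)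
                        | DS j \<Rightarrow> (- dval K pr, 1, 0, j))"

lemma user_less_iff:
  assumes "p \<in> Us K" "q \<in> Us K"
  shows "user_less K pr p q \<longleftrightarrow> ukey pr p < ukey pr q"
proof -
  have e: "rnk K (Inl (med K p)) = rnk K (Inl (med K q)) \<longleftrightarrow> med K p = med K q"
    using inl_inj[OF medM[OF assms(1)] medM[OF assms(2)]] by auto
  have k: "ukey pr p < ukey pr q \<longleftrightarrow> rc pr p < rc pr q \<or> rc pr p = rc pr q \<and>
     (rnk K (Inl (med K q)) < rnk K (Inl (med K p)) \<or>
      rnk K (Inl (med K q)) = rnk K (Inl (med K p)) \<and> rk pr p < rk pr q)"
    unfolding ukey_def by auto
  show ?thesis unfolding k user_less_def using e by (cases "med K p = med K q") auto
qed

lemma slot_gt_iff: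
  assumes "b \<in> SL" "b' \<in> SL"
  shows "slot_gt K pr b b' \<longleftrightarrow> skey pr b < skey pr b'"
proof -
  obtain a i a' j where b: "b = (a,i)" "b' = (a',j)" by (cases b, cases b')
  have e: "rnk K (Inr a) = rnk K (Inr a') \<longleftrightarrow> a = a'"
    using inr_inj assms b SL_iff by fastforce
  have k: "skey pr b < skey pr b' \<longleftrightarrow> rv pr a > rv pr a' \<or> rv pr a = rv pr a' \<and>
     (rnk K (Inr a) < rnk K (Inr a') \<or> rnk K (Inr a) = rnk K (Inr a') \<and> i < j)"
    unfolding b skey_def by auto
  have "slot_gt K pr b b' \<longleftrightarrow> rv pr a > rv pr a' \<or> rv pr a = rv pr a' \<and>
     (rnk K (Inr a) < rnk K (Inr a') \<or> rnk K (Inr a) = rnk K (Inr a') \<and> i < j)"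
    unfolding b slot_gt.simps using e by (cases "a = a'") auto
  then show ?thesis using k by simp
qed

lemma xall_iff: "x \<in> xall K pr \<longleftrightarrow> (\<exists>b. x = RS b \<and> b \<in> SL) \<or> (\<exists>j. x = DS j \<and> j < nitems K pr)"
  unfolding xall_def by auto

lemma vgt_iff:
  assumes "x \<in> xall K pr" "y \<in> xall K pr"
  shows "vgt K pr x y \<longleftrightarrow> vkey pr x < vkey pr y"
proof -
  have e: "rnk K (Inr (fst b)) = rnk K (Inr (fst b')) \<longleftrightarrow> fst b = fst b'" if "b \<in> SL" "b' \<in> SL" for b b'
    using inr_inj[of "fst b" "fst b'"] that SL_iff by auto
  show ?thesis
  proof (cases x)
    case (RS b)
    then obtain a i where b: "x = RS (a,i)" by (cases b) auto
    show ?thesis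
    proof (cases y)
      case (RS b')
      then obtain a' j where b': "y = RS (a',j)" by (cases b') auto
      have "(a,i) \<in> SL" "(a',j) \<in> SL" using assms b b' xall_iff by auto
      then have "rnk K (Inr a) = rnk K (Inr a') \<longleftrightarrow> a = a'" using e[of "(a,i)" "(a',j)"] by auto
      then show ?thesis unfolding b b' vgt_def vkey_def by (cases "a = a'") auto
    next
      case (DS j)
      then show ?thesis unfolding b vgt_def vkey_def by auto
    qed
  next
    case (DS i)
    show ?thesis
    proof (cases y)
      case (RS b')
      then obtain a' j where b': "y = RS (a',j)" by (cases b') auto
      then show ?thesis unfolding DS b' vgt_def vkey_def by auto
    next
      case (DS j)
      then show ?thesis unfolding \<open>x = DS i\<close> vgt_def vkey_def by auto
    qed
  qed
qed

lemma valid_sub: "valid_prof K pr \<Longrightarrow> rP pr \<subseteq> Us K" unfolding valid_prof_def by auto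
lemma valid_fin: "valid_prof K pr \<Longrightarrow> finite (rP pr)" using valid_sub finU finite_subset by blast

lemma ukey_inj:
  assumes "valid_prof K pr"
  shows "inj_on (ukey pr) (rP pr)"
proof (rule inj_onI)
  fix p q assume p: "p \<in> rP pr" and q: "q \<in> rP pr" and eq: "ukey pr p = ukey pr q"
  have pu: "p \<in> Us K" "q \<in> Us K" using p q valid_sub assms by auto
  have "rnk K (Inl (med K p)) = rnk K (Inl (med K q))" "rk pr p = rk pr q"
    using eq unfolding ukey_def by auto
  then have m: "med K p = med K q" using inl_inj medM pu by blast
  have "inj_on (rk pr) (rP pr \<inter> usersof K (med K p))"
    using assms medM pu unfolding valid_prof_def by blast
  moreover have "p \<in> rP pr \<inter> usersof K (med K p)" "q \<in> rP pr \<inter> usersof K (med K p)"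
    using p q pu m unfolding usersof_def by auto
  ultimately show "p = q" using \<open>rk pr p = rk pr q\<close> inj_onD by metis
qed

lemma ukey_inj_sub: "valid_prof K pr \<Longrightarrow> P' \<subseteq> rP pr \<Longrightarrow> inj_on (ukey pr) P'"
  using ukey_inj inj_on_subset by blast

lemma skey_inj: "inj_on (skey pr) SL"
proof (rule inj_onI)
  fix b b' assume "b \<in> SL" "b' \<in> SL" "skey pr b = skey pr b'"
  then show "b = b'" unfolding skey_def using inr_inj SL_iff by (cases b, cases b') auto
qed

lemma vkey_inj: "inj_on (vkey pr) (xall K pr)"
proof (rule inj_onI)
  fix x y assume x: "x \<in> xall K pr" and y: "y \<in> xall K pr" and eq: "vkey pr x = vkey pr y"
  show "x = y"
  proof (cases x)
    case (RS b)
    show ?thesis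
    proof (cases y)
      case (RS b')
      have bs: "b \<in> SL" "b' \<in> SL" using x y \<open>x = RS b\<close> RS xall_iff by auto
      have "rnk K (Inr (fst b)) = rnk K (Inr (fst b'))" "snd b = snd b'"
        using eq \<open>x = RS b\<close> RS unfolding vkey_def by auto
      then have "fst b = fst b'" using inr_inj bs SL_iff by blast
      then show ?thesis using \<open>snd b = snd b'\<close> \<open>x = RS b\<close> RS by (simp add: prod_eq_iff)
    next
      case (DS j)
      then show ?thesis using eq \<open>x = RS b\<close> unfolding vkey_def by auto
    qed
  next
    case (DS i)
    then show ?thesis using eq unfolding vkey_def by (cases y) auto
  qed
qed

lemma finite_xall: "finite (xall K pr)" unfolding xall_def using finSL by auto

lemma upos_eq:
  assumes "P' \<subseteq> Us K" "p \<in> Us K"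
  shows "upos K pr P' p = rnkf (ukey pr) P' p"
  unfolding upos_def rnkf_def using user_less_iff assms
  by (intro arg_cong[where f=card]) blast

lemma spos_eq:
  assumes "B' \<subseteq> SL" "b \<in> SL"
  shows "spos K pr B' b = rnkf (skey pr) B' b"
  unfolding spos_def rnkf_def using slot_gt_iff assms
  by (intro arg_cong[where f=card]) blast

lemma vpos_eq:
  assumes "x \<in> xall K pr"
  shows "vpos K pr x = rnkf (vkey pr) (xall K pr) x"
  unfolding vpos_def rnkf_def using vgt_iff assms
  by (intro arg_cong[where f=card]) blast

end

context mk begin

definition beta :: "('u,'a) prof \<Rightarrow> 'u \<Rightarrow> nat" where
  "beta pr p = card {b\<in>SL. slot_beats_user K pr b p}"

abbreviation "Lc pr P' \<equiv> card (canon K pr P' SL)"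
abbreviation "ur pr P' p \<equiv> rnkf (ukey pr) P' p"

definition G :: "('u,'a) prof \<Rightarrow> 'u set \<Rightarrow> 'u set" where
  "G pr P' = {p\<in>P'. ur pr P' p < beta pr p}"

lemma beats_iff: "slot_beats_user K pr b p \<longleftrightarrow> rv pr (fst b) > rc pr p \<or>
   (rv pr (fst b) = rc pr p \<and> rnk K (Inr (fst b)) < rnk K (Inl (med K p)))"
  by (cases b) auto

lemma beats_up:
  assumes "skey pr b' < skey pr b" "slot_beats_user K pr b p"
  shows "slot_beats_user K pr b' p"
  using assms unfolding beats_iff skey_def by auto

lemma beats_down:
  assumes "ukey pr q \<le> ukey pr p" "slot_beats_user K pr b p"
  shows "slot_beats_user K pr b q"
  using assms unfolding beats_iff ukey_def by auto

lemma beta_mono: "ukey pr q \<le> ukey pr p \<Longrightarrow> beta pr p \<le> beta pr q"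
  unfolding beta_def using finSL beats_down by (intro card_mono) auto

lemma beta_le: "beta pr p \<le> card SL"
  unfolding beta_def using finSL by (intro card_mono) auto

lemma beats_pos:
  assumes "b \<in> SL"
  shows "slot_beats_user K pr b p \<longleftrightarrow> rnkf (skey pr) SL b < beta pr p"
proof
  assume h: "slot_beats_user K pr b p"
  have "insert b {b'\<in>SL. skey pr b' < skey pr b} \<subseteq> {b\<in>SL. slot_beats_user K pr b p}"
    using h assms beats_up[of pr _ b p] by blast
  then have "card (insert b {b'\<in>SL. skey pr b' < skey pr b}) \<le> beta pr p"
    unfolding beta_def using finSL by (intro card_mono) auto
  moreover have "card (insert b {b'\<in>SL. skey pr b' < skey pr b}) = rnkf (skey pr) SL b + 1"
    unfolding rnkf_def using finSL by (subst card_insert_disjoint) auto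
  ultimately show "rnkf (skey pr) SL b < beta pr p" by simp
next
  assume h: "rnkf (skey pr) SL b < beta pr p"
  show "slot_beats_user K pr b p"
  proof (rule ccontr)
    assume nb: "\<not> slot_beats_user K pr b p"
    have "{b\<in>SL. slot_beats_user K pr b p} \<subseteq> {b'\<in>SL. skey pr b' < skey pr b}"
    proof
      fix b' assume b': "b' \<in> {b\<in>SL. slot_beats_user K pr b p}"
      then have "b' \<noteq> b" using nb by auto
      then have "skey pr b' \<noteq> skey pr b" using skey_inj b' assms inj_onD by fastforce
      moreover have "\<not> skey pr b < skey pr b'" using beats_up b' nb by blast
      ultimately show "b' \<in> {b'\<in>SL. skey pr b' < skey pr b}" using b' by auto
    qed
    then have "beta pr p \<le> rnkf (skey pr) SL b"
      unfolding beta_def rnkf_def using finSL by (intro card_mono) auto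
    with h show False by simp
  qed
qed

lemma canon_char:
  assumes "valid_prof K pr" "P' \<subseteq> rP pr"
  shows "canon K pr P' SL = {(p,b). p\<in>P' \<and> b\<in>SL \<and> ur pr P' p = rnkf (skey pr) SL b \<and> ur pr P' p < beta pr p}"
proof -
  have PU: "P' \<subseteq> Us K" using assms valid_sub by blast
  show ?thesis unfolding canon_def
    using upos_eq[OF PU] spos_eq[of SL] beats_pos PU by auto
qed

lemma finP: "valid_prof K pr \<Longrightarrow> P' \<subseteq> rP pr \<Longrightarrow> finite P'"
  using valid_fin finite_subset by blast

lemma Lc_G:
  assumes v: "valid_prof K pr" and P: "P' \<subseteq> rP pr"
  shows "Lc pr P' = card (G pr P')"
proof -
  let ?C = "canon K pr P' SL"
  have inj: "inj_on fst ?C"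
  proof (rule inj_onI)
    fix x y assume x: "x \<in> ?C" and y: "y \<in> ?C" and e: "fst x = fst y"
    obtain p b p' b' where xy: "x = (p,b)" "y = (p',b')" by (cases x, cases y)
    have "b \<in> SL" "b' \<in> SL" "rnkf (skey pr) SL b = rnkf (skey pr) SL b'"
      using x y e xy canon_char[OF v P] by auto
    then have "b = b'" using rnkf_eq_iff[OF finSL skey_inj] by blast
    then show "x = y" using xy e by simp
  qed
  have img: "fst ` ?C = G pr P'"
  proof
    show "fst ` ?C \<subseteq> G pr P'" using canon_char[OF v P] unfolding G_def by auto
    show "G pr P' \<subseteq> fst ` ?C"
    proof
      fix p assume p: "p \<in> G pr P'"
      then have "ur pr P' p < card SL" using beta_le[of pr p] unfolding G_def by auto
      then obtain b where b: "b \<in> SL" "rnkf (skey pr) SL b = ur pr P' p"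
        using rnkf_ex[OF finSL skey_inj] by blast
      then have "(p,b) \<in> ?C" using p canon_char[OF v P] unfolding G_def by auto
      then show "p \<in> fst ` ?C" by force
    qed
  qed
  show ?thesis using card_image[OF inj] img by simp
qed

lemma G_down:
  assumes v: "valid_prof K pr" and P: "P' \<subseteq> rP pr"
    and p: "p \<in> G pr P'" and q: "q \<in> P'" and lt: "ukey pr q < ukey pr p"
  shows "q \<in> G pr P'"
proof -
  have fin: "finite P'" using finP v P by blast
  have "p \<in> P'" using p G_def by auto
  have "ur pr P' q < ur pr P' p" using rnkf_less[OF fin q \<open>p\<in>P'\<close> lt] .
  also have "\<dots> < beta pr p" using p G_def by auto
  also have "\<dots> \<le> beta pr q" using beta_mono lt by auto
  finally show ?thesis using q G_def by auto
qed

lemma Lc_char: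
  assumes v: "valid_prof K pr" and P: "P' \<subseteq> rP pr" and p: "p \<in> P'"
  shows "ur pr P' p < Lc pr P' \<longleftrightarrow> ur pr P' p < beta pr p"
proof -
  have fin: "finite P'" using finP v P by blast
  have inj: "inj_on (ukey pr) P'" using ukey_inj_sub v P by blast
  have finG: "finite (G pr P')" using fin G_def by auto
  have GP: "G pr P' \<subseteq> P'" using G_def by auto
  show ?thesis unfolding Lc_G[OF v P]
  proof
    assume h: "ur pr P' p < beta pr p"
    then have pG: "p \<in> G pr P'" using p G_def by auto
    have "rnkf (ukey pr) (G pr P') p = ur pr P' p"
      using G_down[OF v P pG] by (intro rnkf_prefix[OF GP]) auto
    moreover have "rnkf (ukey pr) (G pr P') p < card (G pr P')" using rnkf_lt_card[OF finG pG] .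
    ultimately show "ur pr P' p < card (G pr P')" by simp
  next
    assume h: "ur pr P' p < card (G pr P')"
    show "ur pr P' p < beta pr p"
    proof (rule ccontr)
      assume n: "\<not> ur pr P' p < beta pr p"
      then have pG: "p \<notin> G pr P'" using G_def by auto
      have "G pr P' \<subseteq> {q\<in>P'. ukey pr q < ukey pr p}"
      proof
        fix q assume q: "q \<in> G pr P'"
        then have "q \<noteq> p" using pG by auto
        then have "ukey pr q \<noteq> ukey pr p" using inj q GP p inj_onD by fastforce
        moreover have "\<not> ukey pr p < ukey pr q" using G_down[OF v P q p] pG by blast
        ultimately show "q \<in> {q\<in>P'. ukey pr q < ukey pr p}" using q GP by auto
      qed
      then have "card (G pr P') \<le> ur pr P' p" unfolding rnkf_def using fin by (intro card_mono) auto
      with h show False by simp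
    qed
  qed
qed

lemma Lc_le: "valid_prof K pr \<Longrightarrow> P' \<subseteq> rP pr \<Longrightarrow> Lc pr P' \<le> card P'"
  using Lc_G[of pr P'] finP[of pr P'] unfolding G_def by (auto intro: card_mono)

lemma Lc_ge_iff:
  assumes v: "valid_prof K pr" and P: "P' \<subseteq> rP pr" and k: "k < card P'"
  obtains p where "p \<in> P'" "ur pr P' p = k" "k < Lc pr P' \<longleftrightarrow> k < beta pr p"
proof -
  have fin: "finite P'" using finP v P by blast
  have inj: "inj_on (ukey pr) P'" using ukey_inj_sub v P by blast
  obtain p where p: "p \<in> P'" "ur pr P' p = k" using rnkf_ex[OF fin inj k] by blast
  then show ?thesis using that Lc_char[OF v P p(1)] by auto
qed

lemma Lc_sub:
  assumes v: "valid_prof K pr" and P: "P'' \<subseteq> P'" "P' \<subseteq> rP pr"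
  shows "Lc pr P'' \<le> Lc pr P'"
proof (rule ccontr)
  assume "\<not> ?thesis"
  then have lt: "Lc pr P' < Lc pr P''" by simp
  define k where "k = Lc pr P'"
  have P2: "P'' \<subseteq> rP pr" using P by blast
  have fin: "finite P'" "finite P''" using finP v P P2 by auto
  have k1: "k < card P''" using lt Lc_le[OF v P2] k_def by simp
  have k2: "k < card P'" using k1 card_mono[OF fin(1) P(1)] by simp
  obtain p'' where p'': "p'' \<in> P''" "ur pr P'' p'' = k" "k < Lc pr P'' \<longleftrightarrow> k < beta pr p''"
    using Lc_ge_iff[OF v P2 k1] by blast
  obtain p where p: "p \<in> P'" "ur pr P' p = k" "k < Lc pr P' \<longleftrightarrow> k < beta pr p"
    using Lc_ge_iff[OF v P(2) k2] by blast
  have b1: "k < beta pr p''" using p''(3) lt k_def by simp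
  have "ur pr P'' p'' \<le> ur pr P' p''" using rnkf_sub_le[OF fin(1) P(1)] .
  then have "\<not> ukey pr p'' < ukey pr p"
    using rnkf_less[OF fin(1) _ p(1), of p'' "ukey pr"] p''(1,2) p(2) P(1) by auto
  then have "ukey pr p \<le> ukey pr p''" by simp
  then have "beta pr p'' \<le> beta pr p" using beta_mono by blast
  then have "k < Lc pr P'" using p(3) b1 by simp
  then show False using k_def by simp
qed

lemma Lc_rem:
  assumes v: "valid_prof K pr" and P: "P'' \<subseteq> P'" "P' \<subseteq> rP pr" and c: "card (P' - P'') \<le> d"
  shows "Lc pr P' \<le> Lc pr P'' + d"
proof (rule ccontr)
  assume "\<not> ?thesis"
  then have lt: "Lc pr P'' + d < Lc pr P'" by simp
  define L where "L = Lc pr P'"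
  define k where "k = L - d - 1"
  have P2: "P'' \<subseteq> rP pr" using P by blast
  have fin: "finite P'" "finite P''" using finP v P P2 by auto
  have L1: "L - 1 < card P'" using Lc_le[OF v P(2)] lt L_def by simp
  obtain p where p: "p \<in> P'" "ur pr P' p = L - 1" "L - 1 < Lc pr P' \<longleftrightarrow> L - 1 < beta pr p"
    using Lc_ge_iff[OF v P(2) L1] by blast
  have bp: "L - 1 < beta pr p" using p(3) L_def lt by simp
  have cP: "card P' = card P'' + card (P' - P'')"
    using fin P(1) by (metis card_Diff_subset card_mono diff_add_inverse le_add_diff_inverse finite_subset)
  have k1: "k < card P''" using L1 c cP k_def lt L_def by linarith
  obtain q where q: "q \<in> P''" "ur pr P'' q = k" "k < Lc pr P'' \<longleftrightarrow> k < beta pr q"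
    using Lc_ge_iff[OF v P2 k1] by blast
  have "ur pr P' q \<le> ur pr P'' q + card (P' - P'')" using rnkf_sub_ge[OF fin(1) P(1)] .
  then have "ur pr P' q \<le> L - 1" using q(2) c k_def lt L_def by linarith
  then have "\<not> ukey pr p < ukey pr q"
    using rnkf_less[OF fin(1) p(1), of q "ukey pr"] q(1) P(1) p(2) by auto
  then have "ukey pr q \<le> ukey pr p" by simp
  then have "beta pr p \<le> beta pr q" using beta_mono by blast
  then have "k < Lc pr P''" using q(3) bp k_def by simp
  then show False using lt k_def L_def by linarith
qed

end

context mk begin

abbreviation "Pm pr m \<equiv> rP pr - usersof K m"

lemma Pm_sub: "Pm pr m \<subseteq> rP pr" by blast

lemma pm_char:
  assumes v: "valid_prof K pr"
  shows "pm K pr m = (if 4 * g < Lc pr (Pm pr m)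
     then Some (THE p. p \<in> Pm pr m \<and> ur pr (Pm pr m) p = Lc pr (Pm pr m) - 4 * g - 1) else None)"
proof -
  have PU: "Pm pr m \<subseteq> Us K" using valid_sub v by blast
  have "\<And>p. p \<in> Pm pr m \<Longrightarrow> upos K pr (Pm pr m) p = ur pr (Pm pr m) p"
    using upos_eq[OF PU] PU by blast
  then have e: "(\<lambda>p. p \<in> Pm pr m \<and> upos K pr (Pm pr m) p = Lc pr (Pm pr m) - 4 * g - 1) =
            (\<lambda>p. p \<in> Pm pr m \<and> ur pr (Pm pr m) p = Lc pr (Pm pr m) - 4 * g - 1)" by auto
  show ?thesis unfolding pm_def Let_def e by simp
qed

lemma pm_Some:
  assumes v: "valid_prof K pr" and s: "pm K pr m = Some q"
  shows "4 * g < Lc pr (Pm pr m)" "q \<in> Pm pr m" "ur pr (Pm pr m) q = Lc pr (Pm pr m) - 4 * g - 1"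
proof -
  have L: "4 * g < Lc pr (Pm pr m)" using s pm_char[OF v, of m] by (auto split: if_splits)
  have fin: "finite (Pm pr m)" using finP[OF v Pm_sub] .
  have inj: "inj_on (ukey pr) (Pm pr m)" using ukey_inj_sub[OF v Pm_sub] .
  have "Lc pr (Pm pr m) - 4 * g - 1 < card (Pm pr m)" using Lc_le[OF v Pm_sub, of m] L by linarith
  then have ex: "\<exists>!p. p \<in> Pm pr m \<and> ur pr (Pm pr m) p = Lc pr (Pm pr m) - 4 * g - 1"
    using rnkf_ex1[OF fin inj] by blast
  have "q = (THE p. p \<in> Pm pr m \<and> ur pr (Pm pr m) p = Lc pr (Pm pr m) - 4 * g - 1)"
    using s L pm_char[OF v, of m] by simp
  then have "q \<in> Pm pr m \<and> ur pr (Pm pr m) q = Lc pr (Pm pr m) - 4 * g - 1"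
    using theI'[OF ex] by simp
  then show "4 * g < Lc pr (Pm pr m)" "q \<in> Pm pr m" "ur pr (Pm pr m) q = Lc pr (Pm pr m) - 4 * g - 1"
    using L by auto
qed

lemma pm_None: "valid_prof K pr \<Longrightarrow> pm K pr m = None \<longleftrightarrow> \<not> 4 * g < Lc pr (Pm pr m)"
  using pm_char by auto

lemma hatP_sub: "hatP K pr m \<subseteq> rP pr \<inter> usersof K m"
  unfolding hatP_def by (auto split: option.splits)

lemma hatP_None: "pm K pr m = None \<Longrightarrow> hatP K pr m = {}"
  unfolding hatP_def by auto

lemma hatP_Some: "pm K pr m = Some q \<Longrightarrow> hatP K pr m = {p \<in> rP pr \<inter> usersof K m. user_less K pr p q}"
  unfolding hatP_def by auto

lemma hatP_lt:
  assumes v: "valid_prof K pr" and s: "pm K pr m = Some q" and p: "p \<in> hatP K pr m"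
  shows "ukey pr p < ukey pr q"
proof -
  have "q \<in> Us K" using pm_Some(2)[OF v s] valid_sub[OF v] by blast
  moreover have "p \<in> Us K" "user_less K pr p q" using p hatP_Some[OF s] valid_sub[OF v] by auto
  ultimately show ?thesis using user_less_iff by blast
qed

lemma items_sub: "items K pr \<subseteq> rP pr" unfolding items_def using hatP_sub by blast

lemma fin_items: "valid_prof K pr \<Longrightarrow> finite (items K pr)"
  using items_sub valid_fin finite_subset by blast

lemma hatP_disj: "m \<noteq> m' \<Longrightarrow> hatP K pr m \<inter> hatP K pr m' = {}"
  using hatP_sub[of pr m] hatP_sub[of pr m'] unfolding usersof_def by auto

lemma fin_hatP: "valid_prof K pr \<Longrightarrow> finite (hatP K pr m)"
proof -
  assume v: "valid_prof K pr"
  have "finite (rP pr \<inter> usersof K m)" using valid_fin[OF v] by blast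
  then show ?thesis using finite_subset[OF hatP_sub] by blast
qed

lemma nitems_sum:
  assumes v: "valid_prof K pr"
  shows "nitems K pr = (\<Sum>m\<in>Ms K. card (hatP K pr m))"
  unfolding nitems_def items_def
  by (rule card_UN_disjoint[OF finM]) (use fin_hatP[OF v] hatP_disj in auto)

lemma items_hatP: "p \<in> usersof K m \<Longrightarrow> m \<in> Ms K \<Longrightarrow> p \<in> items K pr \<longleftrightarrow> p \<in> hatP K pr m"
  unfolding items_def using hatP_sub unfolding usersof_def by blast

lemma qstar:
  assumes v: "valid_prof K pr" and n: "0 < nitems K pr"
  obtains m q where "m \<in> Ms K" "pm K pr m = Some q"
    "\<And>m' q'. m' \<in> Ms K \<Longrightarrow> pm K pr m' = Some q' \<Longrightarrow> ukey pr q' \<le> ukey pr q"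
proof -
  define Q where "Q = {q. \<exists>m\<in>Ms K. pm K pr m = Some q}"
  have Qsub: "Q \<subseteq> rP pr" unfolding Q_def using pm_Some(2)[OF v] by blast
  have finQ: "finite Q" using Qsub valid_fin[OF v] finite_subset by blast
  have "items K pr \<noteq> {}" using n unfolding nitems_def by auto
  then obtain m p where "m \<in> Ms K" "p \<in> hatP K pr m" unfolding items_def by blast
  then obtain q0 where "m \<in> Ms K" "pm K pr m = Some q0" using hatP_None by (cases "pm K pr m") auto
  then have "Q \<noteq> {}" unfolding Q_def by blast
  then have "Max (ukey pr ` Q) \<in> ukey pr ` Q" using finQ by auto
  then obtain q where q: "q \<in> Q" "ukey pr q = Max (ukey pr ` Q)" by auto
  have "\<And>q'. q' \<in> Q \<Longrightarrow> ukey pr q' \<le> ukey pr q" using q finQ by auto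
  then show ?thesis using that q(1) unfolding Q_def by blast
qed

lemma key_fst_le: "(x::'x::linorder \<times> 'y::linorder) \<le> y \<Longrightarrow> fst x \<le> fst y"
  unfolding less_eq_prod_def by auto

lemma rc_le_of_key: "ukey pr q \<le> ukey pr p \<Longrightarrow> rc pr q \<le> rc pr p"
  using key_fst_le[of "ukey pr q" "ukey pr p"] unfolding ukey_def by simp

lemma items_bound_q:
  assumes v: "valid_prof K pr" and m: "m \<in> Ms K" and s: "pm K pr m = Some q"
    and mx: "\<And>m' q'. m' \<in> Ms K \<Longrightarrow> pm K pr m' = Some q' \<Longrightarrow> ukey pr q' \<le> ukey pr q"
  shows "items K pr \<subseteq> {p\<in>rP pr. ukey pr p < ukey pr q}"
    "nitems K pr + 3 * g + 1 \<le> Lc pr (Pm pr m)"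
proof -
  show sub: "items K pr \<subseteq> {p\<in>rP pr. ukey pr p < ukey pr q}"
  proof
    fix p assume "p \<in> items K pr"
    then obtain m' where m': "m' \<in> Ms K" "p \<in> hatP K pr m'" unfolding items_def by blast
    then obtain q' where q': "pm K pr m' = Some q'" using hatP_None by (cases "pm K pr m'") auto
    have "ukey pr p < ukey pr q'" using hatP_lt[OF v q' m'(2)] .
    also have "\<dots> \<le> ukey pr q" using mx m'(1) q' .
    finally show "p \<in> {p\<in>rP pr. ukey pr p < ukey pr q}" using m'(2) hatP_sub by blast
  qed
  have fin: "finite (rP pr)" using valid_fin[OF v] .
  have "nitems K pr \<le> ur pr (rP pr) q" unfolding nitems_def rnkf_def using sub fin by (intro card_mono) auto
  also have "\<dots> \<le> ur pr (Pm pr m) q + card (rP pr - Pm pr m)" using rnkf_sub_ge[OF fin Pm_sub] .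
  also have "card (rP pr - Pm pr m) \<le> g"
  proof -
    have "rP pr - Pm pr m \<subseteq> usersof K m" by blast
    then have "card (rP pr - Pm pr m) \<le> card (usersof K m)" using fin_usersof card_mono by blast
    then show ?thesis using usg m by auto
  qed
  finally show "nitems K pr + 3 * g + 1 \<le> Lc pr (Pm pr m)" using pm_Some[OF v s] by linarith
qed

lemma items_bound:
  assumes v: "valid_prof K pr"
  shows "nitems K pr = 0 \<or> nitems K pr + 3 * g + 1 \<le> Lc pr (rP pr)"
proof (cases "nitems K pr = 0")
  case False
  then obtain m q where m: "m \<in> Ms K" "pm K pr m = Some q"
    "\<And>m' q'. m' \<in> Ms K \<Longrightarrow> pm K pr m' = Some q' \<Longrightarrow> ukey pr q' \<le> ukey pr q"
    using qstar[OF v] by blast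
  have "nitems K pr + 3 * g + 1 \<le> Lc pr (Pm pr m)" using v m(1,2) m(3) by (rule items_bound_q(2))
  then show ?thesis using Lc_sub[OF v Pm_sub[of pr m] subset_refl] by auto
qed simp

lemma cm_nonneg: "valid_prof K pr \<Longrightarrow> cm K pr m = Some x \<Longrightarrow> 0 \<le> x"
  unfolding cm_def using pm_Some(2) valid_prof_def by fastforce

lemma dval_eq:
  assumes v: "valid_prof K pr" and m: "m \<in> Ms K" and s: "pm K pr m = Some q"
    and mx: "\<And>m' q'. m' \<in> Ms K \<Longrightarrow> pm K pr m' = Some q' \<Longrightarrow> ukey pr q' \<le> ukey pr q"
  shows "dval K pr = rc pr q"
proof -
  have eqs: "{x. \<exists>m\<in>Ms K. cm K pr m = Some x} = rc pr ` {q. \<exists>m\<in>Ms K. pm K pr m = Some q}"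
    unfolding cm_def by auto
  have fin: "finite {q. \<exists>m\<in>Ms K. pm K pr m = Some q}"
    using finM by (rule finite_subset[rotated, OF finite_imageI[of "Ms K" "\<lambda>m. the (pm K pr m)"]]) force
  show ?thesis unfolding dval_def eqs
  proof (rule Max_eqI)
    show "finite (rc pr ` {q. \<exists>m\<in>Ms K. pm K pr m = Some q})" using fin by blast
    show "rc pr q \<in> rc pr ` {q. \<exists>m\<in>Ms K. pm K pr m = Some q}" using m s by blast
    fix y assume "y \<in> rc pr ` {q. \<exists>m\<in>Ms K. pm K pr m = Some q}"
    then obtain q' m' where "m' \<in> Ms K" "pm K pr m' = Some q'" "y = rc pr q'" by blast
    then show "y \<le> rc pr q" using mx rc_le_of_key by blast
  qed
qed

lemma cm_le_dval:
  assumes v: "valid_prof K pr" and m: "m \<in> Ms K" and c: "cm K pr m = Some x"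
  shows "x \<le> dval K pr"
proof -
  have fin: "finite {x. \<exists>m\<in>Ms K. cm K pr m = Some x}"
    using finM by (rule finite_subset[rotated, OF finite_imageI[of "Ms K" "\<lambda>m. the (cm K pr m)"]]) force
  show ?thesis unfolding dval_def using m c fin by (intro Max_ge) auto
qed

lemma dval_nonneg:
  assumes v: "valid_prof K pr" and n: "0 < nitems K pr"
  shows "0 \<le> dval K pr"
proof -
  obtain m q where m: "m \<in> Ms K" "pm K pr m = Some q"
    "\<And>m' q'. m' \<in> Ms K \<Longrightarrow> pm K pr m' = Some q' \<Longrightarrow> ukey pr q' \<le> ukey pr q"
    using qstar[OF v n] by blast
  have "cm K pr m = Some (rc pr q)" unfolding cm_def using m by simp
  then show ?thesis using cm_le_dval[OF v m(1)] cm_nonneg[OF v] by (meson order_trans)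
qed

lemma many_high:
  assumes v: "valid_prof K pr" and n: "0 < nitems K pr"
  shows "nitems K pr + 3 * g + 1 \<le> card {b\<in>SL. dval K pr \<le> rv pr (fst b)}"
proof -
  obtain m q where m: "m \<in> Ms K" "pm K pr m = Some q"
    "\<And>m' q'. m' \<in> Ms K \<Longrightarrow> pm K pr m' = Some q' \<Longrightarrow> ukey pr q' \<le> ukey pr q"
    using qstar[OF v n] by blast
  define L where "L = Lc pr (Pm pr m)"
  have nb: "nitems K pr + 3 * g + 1 \<le> L" unfolding L_def using v m(1,2) m(3) by (rule items_bound_q(2))
  have fin: "finite (Pm pr m)" using finP[OF v Pm_sub] .
  have L1: "L - 1 < card (Pm pr m)" using Lc_le[OF v Pm_sub, of m] nb L_def by linarith
  obtain p where p: "p \<in> Pm pr m" "ur pr (Pm pr m) p = L - 1" "L - 1 < Lc pr (Pm pr m) \<longleftrightarrow> L - 1 < beta pr p"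
    using Lc_ge_iff[OF v Pm_sub L1] by blast
  have bp: "L \<le> beta pr p" using p(3) L_def nb by linarith
  have qs: "q \<in> Pm pr m" "ur pr (Pm pr m) q = L - 4 * g - 1" using pm_Some[OF v m(2)] L_def by auto
  have "\<not> ukey pr p < ukey pr q"
    using rnkf_less[OF fin p(1) qs(1), of "ukey pr"] p(2) qs(2) by linarith
  then have "ukey pr q \<le> ukey pr p" by simp
  then have "rc pr q \<le> rc pr p" by (rule rc_le_of_key)
  moreover have "dval K pr = rc pr q" using v m(1,2) m(3) by (rule dval_eq)
  ultimately have d: "dval K pr \<le> rc pr p" by simp
  have "{b\<in>SL. slot_beats_user K pr b p} \<subseteq> {b\<in>SL. dval K pr \<le> rv pr (fst b)}"
    using d unfolding beats_iff by auto
  then have "beta pr p \<le> card {b\<in>SL. dval K pr \<le> rv pr (fst b)}"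
    unfolding beta_def using finSL by (intro card_mono) auto
  then show ?thesis using bp nb by linarith
qed

lemma n_le_SL: "valid_prof K pr \<Longrightarrow> nitems K pr + 3 * g + 1 \<le> card SL \<or> nitems K pr = 0"
  using many_high[of pr] card_mono[OF finSL, of "{b\<in>SL. dval K pr \<le> rv pr (fst b)}"]
  by (cases "nitems K pr = 0") auto

end

context mk begin

definition WR :: "('u,'a) prof \<Rightarrow> ('a \<times> nat) set" where
  "WR pr = {b\<in>SL. rnkf (skey pr) SL b < nitems K pr}"

abbreviation "Aa a \<equiv> RS ` slots K {a}"

lemma vkey_RS: "vkey pr (RS b') < vkey pr (RS b) \<longleftrightarrow> skey pr b' < skey pr b"
  unfolding vkey_def skey_def by auto

lemma vkey_fst: "fst (vkey pr x) = - vval K pr x"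
  unfolding vkey_def by (cases x) (auto split: prod.splits)

lemma card_xall: "card (xall K pr) = card SL + nitems K pr"
proof -
  have "card (xall K pr) = card (RS ` SL) + card (DS ` {..<nitems K pr} :: 'a vslot set)"
    unfolding xall_def using finSL by (subst card_Un_disjoint) auto
  moreover have "card (RS ` SL) = card SL" by (rule card_image) (simp add: inj_on_def)
  moreover have "card (DS ` {..<nitems K pr} :: 'a vslot set) = nitems K pr" by (subst card_image) (auto simp: inj_on_def)
  ultimately show ?thesis by simp
qed

lemma winners_rnk: "winners K pr = {x\<in>xall K pr. rnkf (vkey pr) (xall K pr) x < nitems K pr}"
  unfolding winners_def using vpos_eq by auto

lemma card_winners: "card (winners K pr) = nitems K pr"
  unfolding winners_rnk using card_top[OF finite_xall vkey_inj] card_xall by simp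

lemma DS_not_winner:
  assumes v: "valid_prof K pr" and j: "j < nitems K pr"
  shows "DS j \<notin> winners K pr"
proof -
  have n: "0 < nitems K pr" using j by simp
  have DSx: "DS j \<in> xall K pr" using j xall_iff by auto
  have "RS ` {b\<in>SL. dval K pr \<le> rv pr (fst b)} \<subseteq> {y\<in>xall K pr. vkey pr y < vkey pr (DS j)}"
    unfolding xall_def vkey_def by auto
  then have "card (RS ` {b\<in>SL. dval K pr \<le> rv pr (fst b)}) \<le> rnkf (vkey pr) (xall K pr) (DS j)"
    unfolding rnkf_def using finite_xall by (intro card_mono) auto
  moreover have "card (RS ` {b\<in>SL. dval K pr \<le> rv pr (fst b)}) = card {b\<in>SL. dval K pr \<le> rv pr (fst b)}"
    by (rule card_image) (simp add: inj_on_def)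
  ultimately have "nitems K pr < rnkf (vkey pr) (xall K pr) (DS j)" using many_high[OF v n] by linarith
  then show ?thesis unfolding winners_rnk by auto
qed

lemma winners_RS:
  assumes v: "valid_prof K pr" and x: "x \<in> winners K pr"
  shows "\<exists>b\<in>SL. x = RS b"
proof -
  have "x \<in> xall K pr" using x winners_def by auto
  then show ?thesis using DS_not_winner[OF v] x xall_iff by blast
qed

lemma winner_rank:
  assumes v: "valid_prof K pr" and w: "RS b \<in> winners K pr"
  shows "rnkf (vkey pr) (xall K pr) (RS b) = rnkf (skey pr) SL b"
proof -
  have "{y\<in>xall K pr. vkey pr y < vkey pr (RS b)} = RS ` {b'\<in>SL. skey pr b' < skey pr b}"
  proof
    show "RS ` {b'\<in>SL. skey pr b' < skey pr b} \<subseteq> {y\<in>xall K pr. vkey pr y < vkey pr (RS b)}"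
      by (auto simp: vkey_RS xall_iff)
    show "{y\<in>xall K pr. vkey pr y < vkey pr (RS b)} \<subseteq> RS ` {b'\<in>SL. skey pr b' < skey pr b}"
    proof
      fix y assume y: "y \<in> {y\<in>xall K pr. vkey pr y < vkey pr (RS b)}"
      have bx: "RS b \<in> xall K pr" using w winners_def by auto
      show "y \<in> RS ` {b'\<in>SL. skey pr b' < skey pr b}"
      proof (cases y)
        case (RS b')
        then show ?thesis using y by (auto simp: vkey_RS xall_iff)
      next
        case (DS j)
        have yx: "y \<in> xall K pr" using y by auto
        have "rnkf (vkey pr) (xall K pr) y < rnkf (vkey pr) (xall K pr) (RS b)"
          using rnkf_less[OF finite_xall yx bx] y by auto
        then have "y \<in> winners K pr" using w yx unfolding winners_rnk by auto
        moreover have "j < nitems K pr" using yx DS xall_iff by auto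
        ultimately show ?thesis using DS_not_winner[OF v] DS by auto
      qed
    qed
  qed
  then show ?thesis unfolding rnkf_def by (simp add: card_image inj_on_def)
qed

lemma card_WR: "valid_prof K pr \<Longrightarrow> card (WR pr) = nitems K pr"
  unfolding WR_def using n_le_SL card_top[OF finSL skey_inj] by force

lemma winners_eq:
  assumes v: "valid_prof K pr"
  shows "winners K pr = RS ` WR pr"
proof -
  have sub: "winners K pr \<subseteq> RS ` WR pr"
  proof
    fix x assume x: "x \<in> winners K pr"
    then obtain b where b: "b \<in> SL" "x = RS b" using winners_RS[OF v] by blast
    have "rnkf (vkey pr) (xall K pr) x < nitems K pr" using x winners_rnk by auto
    then have "b \<in> WR pr" using winner_rank[OF v] x b unfolding WR_def by auto
    then show "x \<in> RS ` WR pr" using b by auto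
  qed
  have "card (RS ` WR pr) = card (winners K pr)"
    using card_WR[OF v] card_winners by (simp add: card_image inj_on_def)
  moreover have "finite (RS ` WR pr)" unfolding WR_def using finSL by auto
  ultimately show ?thesis using sub card_subset_eq by metis
qed

lemma WR_sub: "WR pr \<subseteq> SL" unfolding WR_def by auto

lemma items_rank_img:
  assumes v: "valid_prof K pr"
  shows "ur pr (items K pr) ` items K pr = {..<nitems K pr}"
  unfolding nitems_def using rnkf_image[OF fin_items[OF v] ukey_inj_sub[OF v items_sub]] .

lemma assign_eq:
  assumes v: "valid_prof K pr"
  shows "assign K pr = {(p,b). p \<in> items K pr \<and> b \<in> WR pr \<and> ur pr (items K pr) p = rnkf (skey pr) SL b}"
proof -
  have IU: "items K pr \<subseteq> Us K" using items_sub valid_sub[OF v] by blast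
  have "\<And>p b. p \<in> items K pr \<Longrightarrow> b \<in> WR pr \<Longrightarrow>
     upos K pr (items K pr) p = vpos K pr (RS b) \<longleftrightarrow> ur pr (items K pr) p = rnkf (skey pr) SL b"
  proof -
    fix p b assume p: "p \<in> items K pr" and b: "b \<in> WR pr"
    have w: "RS b \<in> winners K pr" using winners_eq[OF v] b by auto
    have "RS b \<in> xall K pr" using w unfolding winners_def by blast
    then have "vpos K pr (RS b) = rnkf (skey pr) SL b"
      using vpos_eq winner_rank[OF v w] by simp
    moreover have "upos K pr (items K pr) p = ur pr (items K pr) p" using upos_eq[OF IU] p IU by auto
    ultimately show "upos K pr (items K pr) p = vpos K pr (RS b) \<longleftrightarrow> ur pr (items K pr) p = rnkf (skey pr) SL b"
      by simp
  qed
  then show ?thesis unfolding assign_def winners_eq[OF v] by auto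
qed

lemma fst_assign:
  assumes v: "valid_prof K pr"
  shows "fst ` assign K pr = items K pr"
proof
  show "fst ` assign K pr \<subseteq> items K pr" using assign_eq[OF v] by auto
  show "items K pr \<subseteq> fst ` assign K pr"
  proof
    fix p assume p: "p \<in> items K pr"
    then have i: "ur pr (items K pr) p < nitems K pr" using items_rank_img[OF v] by auto
    then have "ur pr (items K pr) p < card SL" using n_le_SL[OF v] by auto
    then obtain b where b: "b \<in> SL" "rnkf (skey pr) SL b = ur pr (items K pr) p"
      using rnkf_ex[OF finSL skey_inj] by blast
    then have "b \<in> WR pr" using i WR_def by auto
    then have "(p,b) \<in> assign K pr" using assign_eq[OF v] p b by auto
    then show "p \<in> fst ` assign K pr" by force
  qed
qed

lemma snd_assign:
  assumes v: "valid_prof K pr"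
  shows "snd ` assign K pr = WR pr" "inj_on snd (assign K pr)"
proof -
  have inj: "inj_on (ur pr (items K pr)) (items K pr)"
    using rnkf_inj[OF fin_items[OF v] ukey_inj_sub[OF v items_sub]] .
  show "inj_on snd (assign K pr)"
  proof (rule inj_onI)
    fix x y assume x: "x \<in> assign K pr" and y: "y \<in> assign K pr" and e: "snd x = snd y"
    obtain p b p' b' where xy: "x = (p,b)" "y = (p',b')" by (cases x, cases y)
    have "p \<in> items K pr" "p' \<in> items K pr" "ur pr (items K pr) p = ur pr (items K pr) p'"
      using x y xy e assign_eq[OF v] by auto
    then have "p = p'" using inj inj_onD by metis
    then show "x = y" using xy e by simp
  qed
  show "snd ` assign K pr = WR pr"
  proof
    show "snd ` assign K pr \<subseteq> WR pr" using assign_eq[OF v] by auto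
    show "WR pr \<subseteq> snd ` assign K pr"
    proof
      fix b assume b: "b \<in> WR pr"
      then have "rnkf (skey pr) SL b \<in> {..<nitems K pr}" unfolding WR_def by auto
      then obtain p where p: "p \<in> items K pr" "ur pr (items K pr) p = rnkf (skey pr) SL b"
        using items_rank_img[OF v] by (metis imageE)
      then have "(p,b) \<in> assign K pr" using assign_eq[OF v] b by auto
      then show "b \<in> snd ` assign K pr" by force
    qed
  qed
qed

lemma assign_count:
  assumes v: "valid_prof K pr"
  shows "card {x\<in>assign K pr. fst (snd x) = a} = card {b\<in>WR pr. fst b = a}"
proof -
  have "snd ` {x\<in>assign K pr. fst (snd x) = a} = {b\<in>WR pr. fst b = a}"
  proof
    show "snd ` {x\<in>assign K pr. fst (snd x) = a} \<subseteq> {b\<in>WR pr. fst b = a}"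
      using snd_assign(1)[OF v] by auto
    show "{b\<in>WR pr. fst b = a} \<subseteq> snd ` {x\<in>assign K pr. fst (snd x) = a}"
    proof
      fix b assume b: "b \<in> {b\<in>WR pr. fst b = a}"
      then obtain x where "x \<in> assign K pr" "snd x = b" using snd_assign(1)[OF v] by (metis (no_types, lifting) imageE mem_Collect_eq)
      then show "b \<in> snd ` {x\<in>assign K pr. fst (snd x) = a}" using b by force
    qed
  qed
  moreover have i: "inj_on snd {x\<in>assign K pr. fst (snd x) = a}"
    by (rule inj_on_subset[OF snd_assign(2)[OF v]]) auto
  ultimately show ?thesis using card_image[OF i] by simp
qed

lemma nwin_eq:
  assumes v: "valid_prof K pr"
  shows "nwin K pr a = card {b\<in>WR pr. fst b = a}"
proof -
  have "{i. RS (a,i) \<in> winners K pr} = {i. (a,i) \<in> WR pr}" using winners_eq[OF v] by auto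
  moreover have "(\<lambda>i. (a,i)) ` {i. (a,i) \<in> WR pr} = {b\<in>WR pr. fst b = a}" by force
  moreover have "inj_on (\<lambda>i. (a,i)) {i. (a,i) \<in> WR pr}" by (simp add: inj_on_def)
  ultimately show ?thesis unfolding nwin_def by (simp add: card_image[symmetric])
qed

lemma adv_count:
  assumes v: "valid_prof K pr"
  shows "card {x\<in>assign K pr. fst (snd x) = a} = nwin K pr a"
  using assign_count[OF v] nwin_eq[OF v] by simp

lemma winners_Aa:
  assumes v: "valid_prof K pr"
  shows "winners K pr \<inter> Aa a = RS ` {b\<in>WR pr. fst b = a}"
proof -
  have e: "WR pr \<inter> slots K {a} = {b\<in>WR pr. fst b = a}" using WR_sub unfolding slots_def by auto
  have "inj RS" by (simp add: inj_def)
  then have "RS ` WR pr \<inter> Aa a = RS ` (WR pr \<inter> slots K {a})" by (rule image_Int[symmetric])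
  then show ?thesis using e winners_eq[OF v] by simp
qed

lemma sum_winners_Aa:
  assumes v: "valid_prof K pr"
  shows "sum (vval K pr) (winners K pr \<inter> Aa a) = real (nwin K pr a) * rv pr a"
proof -
  have "sum (vval K pr) (RS ` {b\<in>WR pr. fst b = a}) = sum (\<lambda>b. vval K pr (RS b)) {b\<in>WR pr. fst b = a}"
    by (rule sum.reindex_cong[where l=RS]) (auto simp: inj_on_def)
  also have "\<dots> = sum (\<lambda>b. rv pr a) {b\<in>WR pr. fst b = a}"
    by (rule sum.cong) (auto simp: split: prod.splits)
  also have "\<dots> = real (card {b\<in>WR pr. fst b = a}) * rv pr a" by simp
  finally show ?thesis using winners_Aa[OF v] nwin_eq[OF v] by simp
qed

lemma card_winners_Aa:
  assumes v: "valid_prof K pr"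
  shows "card (winners K pr \<inter> Aa a) = nwin K pr a"
  using winners_Aa[OF v] nwin_eq[OF v] by (simp add: card_image inj_on_def)

lemma optw_fin:
  assumes "finite Y"
  shows "finite ((\<lambda>Z. \<Sum>z\<in>Z. vval K pr z) ` {Z. Z \<subseteq> Y \<and> card Z \<le> nitems K pr})"
  using assms by auto

lemma optw_ge:
  assumes "finite Y" "Z \<subseteq> Y" "card Z \<le> nitems K pr"
  shows "sum (vval K pr) Z \<le> optw K pr Y"
  unfolding optw_def using assms optw_fin[OF assms(1)] by (intro Max_ge) auto

lemma optw_ex:
  assumes "finite Y"
  obtains Z where "Z \<subseteq> Y" "card Z \<le> nitems K pr" "optw K pr Y = sum (vval K pr) Z"
proof -
  have ne: "(\<lambda>Z. \<Sum>z\<in>Z. vval K pr z) ` {Z. Z \<subseteq> Y \<and> card Z \<le> nitems K pr} \<noteq> {}" by auto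
  have "optw K pr Y \<in> (\<lambda>Z. \<Sum>z\<in>Z. vval K pr z) ` {Z. Z \<subseteq> Y \<and> card Z \<le> nitems K pr}"
    unfolding optw_def using Max_in[OF optw_fin[OF assms] ne] .
  then show ?thesis using that by auto
qed

lemma optw_mono:
  assumes "finite Y'" "Y \<subseteq> Y'"
  shows "optw K pr Y \<le> optw K pr Y'"
proof -
  have "finite Y" using assms finite_subset by blast
  then obtain Z where "Z \<subseteq> Y" "card Z \<le> nitems K pr" "optw K pr Y = sum (vval K pr) Z"
    using optw_ex by blast
  then show ?thesis using optw_ge[OF assms(1)] assms(2) by fastforce
qed

lemma vval_nonneg:
  assumes v: "valid_prof K pr" and x: "x \<in> xall K pr"
  shows "0 \<le> vval K pr x"
proof (cases x)
  case (RS b)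
  then have "fst b \<in> As K" using x xall_iff SL_iff by auto
  then show ?thesis using v RS unfolding valid_prof_def by (cases b) auto
next
  case (DS j)
  then have "0 < nitems K pr" using x xall_iff by auto
  then show ?thesis using dval_nonneg[OF v] DS by simp
qed

lemma optw_xall:
  assumes v: "valid_prof K pr"
  shows "optw K pr (xall K pr) = sum (vval K pr) (winners K pr)"
proof (rule antisym)
  obtain Z where Z: "Z \<subseteq> xall K pr" "card Z \<le> nitems K pr" "optw K pr (xall K pr) = sum (vval K pr) Z"
    using optw_ex[OF finite_xall] by blast
  have "sum (vval K pr) Z \<le> sum (vval K pr) {x\<in>xall K pr. rnkf (vkey pr) (xall K pr) x < nitems K pr}"
  proof (rule top_sum[OF finite_xall vkey_inj _ Z(1,2)])
    show "\<And>x y. x \<in> xall K pr \<Longrightarrow> y \<in> xall K pr \<Longrightarrow> vkey pr x < vkey pr y \<Longrightarrow> vval K pr y \<le> vval K pr x"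
    proof -
      fix x y assume "vkey pr x < vkey pr y"
      then have "fst (vkey pr x) \<le> fst (vkey pr y)" using key_fst_le[of "vkey pr x" "vkey pr y"] by simp
      then show "vval K pr y \<le> vval K pr x" using vkey_fst by simp
    qed
    show "nitems K pr \<le> card (xall K pr)" using card_xall by simp
    show "card Z = nitems K pr \<or> (\<forall>x\<in>xall K pr. 0 \<le> vval K pr x)" using vval_nonneg[OF v] by blast
  qed
  then show "optw K pr (xall K pr) \<le> sum (vval K pr) (winners K pr)" using Z(3) winners_rnk by simp
  show "sum (vval K pr) (winners K pr) \<le> optw K pr (xall K pr)"
    by (rule optw_ge[OF finite_xall]) (auto simp: card_winners, auto simp: winners_def)
qed

lemma charge_eq:
  assumes v: "valid_prof K pr"
  shows "charge K pr a = optw K pr (xall K pr - Aa a) - sum (vval K pr) (winners K pr - Aa a)"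
proof -
  have fw: "finite (winners K pr)" unfolding winners_def using finite_xall[of pr] by simp
  have "sum (vval K pr) (winners K pr) = sum (vval K pr) (winners K pr \<inter> Aa a) + sum (vval K pr) (winners K pr - Aa a)"
    using sum.Int_Diff[OF fw] by blast
  then show ?thesis unfolding charge_def optw_xall[OF v] sum_winners_Aa[OF v] by simp
qed

lemma adv_util_eq:
  assumes v: "valid_prof K pr"
  shows "adv_util K vt pr a = real (nwin K pr a) * vt a - optw K pr (xall K pr - Aa a) + sum (vval K pr) (winners K pr - Aa a)"
  unfolding adv_util_def adv_count[OF v] charge_eq[OF v] by simp

end

context mk begin

lemma au_eq:
  assumes v: "valid_prof K pr" and m: "m \<in> Ms K"
  shows "assigned_users K pr m = hatP K pr m"
  unfolding assigned_users_def fst_assign[OF v] using items_hatP[OF _ m] hatP_sub by blast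

lemma fin_winners: "finite (winners K pr)" unfolding winners_def using finite_xall[of pr] by simp

lemma med_util_Some:
  assumes v: "valid_prof K pr" and m: "m \<in> Ms K" and s: "pm K pr m = Some q"
  shows "med_util K c pr m = (\<Sum>p\<in>hatP K pr m. rc pr q - c p)"
proof -
  have "cm K pr m = Some (rc pr q)" unfolding cm_def using s by simp
  then have "pay K pr m = rc pr q * real (card (hatP K pr m))" unfolding pay_def au_eq[OF v m] by simp
  then show ?thesis unfolding med_util_def au_eq[OF v m] by (simp add: sum_subtractf)
qed

lemma med_util_None:
  assumes v: "valid_prof K pr" and m: "m \<in> Ms K" and s: "pm K pr m = None"
  shows "med_util K c pr m = 0"
proof -
  have "cm K pr m = None" unfolding cm_def using s by simp
  then show ?thesis unfolding med_util_def pay_def au_eq[OF v m] hatP_None[OF s] by simp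
qed

lemma med_IR:
  assumes v: "valid_prof K pr" and m: "m \<in> Ms K" and t: "truthful_med K c pr m"
  shows "0 \<le> med_util K c pr m"
proof (cases "pm K pr m")
  case None
  then show ?thesis using med_util_None[OF v m] by simp
next
  case (Some q)
  have qU: "q \<in> Us K" using pm_Some(2)[OF v Some] valid_sub[OF v] by blast
  have "0 \<le> rc pr q - c p" if p: "p \<in> hatP K pr m" for p
  proof -
    have "ukey pr p < ukey pr q" using hatP_lt[OF v Some p] .
    then have "rc pr p \<le> rc pr q" using rc_le_of_key by (meson less_imp_le)
    moreover have "rc pr p = c p" using t p hatP_sub unfolding truthful_med_def by blast
    ultimately show ?thesis by simp
  qed
  then show ?thesis unfolding med_util_Some[OF v m Some] by (intro sum_nonneg) auto
qed

lemma adv_IR: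
  assumes v: "valid_prof K pr" and t: "rv pr a = vt a"
  shows "0 \<le> adv_util K vt pr a"
proof -
  have fw: "finite (winners K pr)" by (rule fin_winners)
  have "optw K pr (xall K pr) = real (nwin K pr a) * rv pr a + sum (vval K pr) (winners K pr - Aa a)"
    unfolding optw_xall[OF v] using sum.Int_Diff[OF fw, of "vval K pr" "Aa a"] sum_winners_Aa[OF v] by simp
  moreover have "optw K pr (xall K pr - Aa a) \<le> optw K pr (xall K pr)"
    using optw_mono[OF finite_xall] by blast
  ultimately show ?thesis unfolding adv_util_eq[OF v] using t by simp
qed

lemma card_winners_diff:
  assumes v: "valid_prof K pr"
  shows "card (winners K pr - Aa a) + nwin K pr a = nitems K pr"
  using card_Int_Diff[OF fin_winners, of pr "Aa a"] card_winners_Aa[OF v] card_winners by simp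

lemma charge_ge:
  assumes v: "valid_prof K pr"
  shows "real (nwin K pr a) * dval K pr \<le> charge K pr a"
proof -
  define D where "D = (DS ` {..<nwin K pr a} :: 'a vslot set)"
  have nle: "nwin K pr a \<le> nitems K pr" using card_winners_diff[OF v, of a] by linarith
  have Dx: "D \<subseteq> xall K pr - Aa a" unfolding D_def xall_def using nle by auto
  have Dw: "D \<inter> (winners K pr - Aa a) = {}" unfolding D_def using DS_not_winner[OF v] nle by force
  have cD: "card D = nwin K pr a" unfolding D_def by (subst card_image) (auto simp: inj_on_def)
  have finD: "finite D" unfolding D_def by simp
  have fW: "finite (winners K pr - Aa a)" using fin_winners by blast
  have "card ((winners K pr - Aa a) \<union> D) = nitems K pr"
    using card_Un_disjoint[OF fW finD] Dw cD card_winners_diff[OF v, of a] by (simp add: Int_commute)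
  moreover have "(winners K pr - Aa a) \<union> D \<subseteq> xall K pr - Aa a" using Dx winners_def by auto
  ultimately have "sum (vval K pr) ((winners K pr - Aa a) \<union> D) \<le> optw K pr (xall K pr - Aa a)"
    using optw_ge[OF finite_Diff[OF finite_xall]] by simp
  moreover have "sum (vval K pr) ((winners K pr - Aa a) \<union> D) = sum (vval K pr) (winners K pr - Aa a) + sum (vval K pr) D"
    using sum.union_disjoint[OF fW finD] Dw by (simp add: Int_commute)
  moreover have "sum (vval K pr) D = real (nwin K pr a) * dval K pr"
    unfolding D_def by (subst sum.reindex) (auto simp: inj_on_def)
  ultimately show ?thesis unfolding charge_eq[OF v] by simp
qed

lemma sum_nwin:
  assumes v: "valid_prof K pr"
  shows "(\<Sum>a\<in>As K. nwin K pr a) = nitems K pr"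
proof -
  have "WR pr = (\<Union>a\<in>As K. {b\<in>WR pr. fst b = a})"
  proof
    show "WR pr \<subseteq> (\<Union>a\<in>As K. {b\<in>WR pr. fst b = a})"
    proof
      fix b assume b: "b \<in> WR pr"
      then have "fst b \<in> As K" using WR_sub SL_iff by blast
      then show "b \<in> (\<Union>a\<in>As K. {b\<in>WR pr. fst b = a})" using b by blast
    qed
  qed auto
  then have "card (WR pr) = card (\<Union>a\<in>As K. {b\<in>WR pr. fst b = a})" by simp
  also have "\<dots> = (\<Sum>a\<in>As K. card {b\<in>WR pr. fst b = a})"
    by (rule card_UN_disjoint[OF finA]) (use finite_subset[OF WR_sub finSL] in auto)
  finally have "card (WR pr) = (\<Sum>a\<in>As K. card {b\<in>WR pr. fst b = a})" .
  then show ?thesis using card_WR[OF v] nwin_eq[OF v] by simp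
qed

lemma BB_prof:
  assumes v: "valid_prof K pr"
  shows "(\<Sum>m\<in>Ms K. pay K pr m) \<le> (\<Sum>a\<in>As K. charge K pr a)"
proof (cases "nitems K pr = 0")
  case True
  then have "\<And>m. m \<in> Ms K \<Longrightarrow> hatP K pr m = {}" using nitems_sum[OF v] fin_hatP[OF v] finM by simp
  then have p0: "\<And>m. m \<in> Ms K \<Longrightarrow> pay K pr m = 0" unfolding pay_def using au_eq[OF v] by (auto split: option.splits)
  have "\<And>a. 0 \<le> charge K pr a" using charge_ge[OF v] card_winners_diff[OF v] True by (metis add_is_0 mult_eq_0_iff of_nat_0)
  then show ?thesis using p0 by (simp add: sum_nonneg)
next
  case False
  then have n: "0 < nitems K pr" by simp
  have d0: "0 \<le> dval K pr" using dval_nonneg[OF v n] .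
  have "pay K pr m \<le> dval K pr * real (card (hatP K pr m))" if m: "m \<in> Ms K" for m
  proof (cases "cm K pr m")
    case None
    then show ?thesis unfolding pay_def using d0 by simp
  next
    case (Some x)
    then have "x \<le> dval K pr" using cm_le_dval[OF v m] by simp
    then show ?thesis unfolding pay_def Some au_eq[OF v m] by (simp add: mult_right_mono)
  qed
  then have "(\<Sum>m\<in>Ms K. pay K pr m) \<le> (\<Sum>m\<in>Ms K. dval K pr * real (card (hatP K pr m)))"
    by (rule sum_mono)
  also have "\<dots> = dval K pr * real (nitems K pr)"
    unfolding nitems_sum[OF v] by (simp add: sum_distrib_left)
  also have "\<dots> = (\<Sum>a\<in>As K. real (nwin K pr a) * dval K pr)"
    unfolding sum_nwin[OF v, symmetric] by (simp add: sum_distrib_left mult.commute)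
  also have "\<dots> \<le> (\<Sum>a\<in>As K. charge K pr a)" using charge_ge[OF v] by (rule sum_mono)
  finally show ?thesis .
qed

lemma canon_cong:
  assumes rv: "rv pr' = rv pr" and c: "\<And>p. p \<in> P \<Longrightarrow> rc pr' p = rc pr p \<and> rk pr' p = rk pr p"
  shows "canon K pr' P B = canon K pr P B" "\<And>p. p \<in> P \<Longrightarrow> upos K pr' P p = upos K pr P p"
proof -
  have ul: "user_less K pr' q p = user_less K pr q p" if "p \<in> P" "q \<in> P" for p q
    using c[OF that(1)] c[OF that(2)] unfolding user_less_def by simp
  show up: "\<And>p. p \<in> P \<Longrightarrow> upos K pr' P p = upos K pr P p"
    unfolding upos_def using ul by (intro arg_cong[where f=card]) auto
  have sg: "slot_gt K pr' = slot_gt K pr"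
  proof (intro ext)
    fix x y show "slot_gt K pr' x y = slot_gt K pr x y" using rv by (cases x, cases y) auto
  qed
  have sb: "slot_beats_user K pr' b p = slot_beats_user K pr b p" if "p \<in> P" for b p
    using c[OF that] rv by (cases b) auto
  show "canon K pr' P B = canon K pr P B"
    unfolding canon_def spos_def sg using up sb by auto
qed

lemma osm_Pm:
  assumes v: "valid_prof K pr" and v': "valid_prof K pr'" and o: "others_same_med K pr pr' m"
  shows "Pm pr' m = Pm pr m"
  using o valid_sub[OF v] valid_sub[OF v'] unfolding others_same_med_def usersof_def by auto

lemma osm_pm:
  assumes v: "valid_prof K pr" and v': "valid_prof K pr'" and o: "others_same_med K pr pr' m"
  shows "pm K pr' m = pm K pr m"
proof -
  have P: "Pm pr' m = Pm pr m" using osm_Pm[OF v v' o] .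
  have rv: "rv pr' = rv pr" using o unfolding others_same_med_def by blast
  have o2: "\<forall>p\<in>Us K. med K p \<noteq> m \<longrightarrow> (p \<in> rP pr' \<longleftrightarrow> p \<in> rP pr) \<and> (p \<in> rP pr \<longrightarrow> rc pr' p = rc pr p \<and> rk pr' p = rk pr p)"
    using o unfolding others_same_med_def by blast
  have c: "rc pr' p = rc pr p \<and> rk pr' p = rk pr p" if p: "p \<in> Pm pr m" for p
  proof -
    have "p \<in> Us K" "med K p \<noteq> m" "p \<in> rP pr" using p valid_sub[OF v] unfolding usersof_def by auto
    then show ?thesis using o2 by blast
  qed
  have e: "(\<lambda>p. p \<in> Pm pr m \<and> upos K pr' (Pm pr m) p = X) = (\<lambda>p. p \<in> Pm pr m \<and> upos K pr (Pm pr m) p = X)" for X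
    using canon_cong(2)[where P="Pm pr m", OF rv c] by auto
  have cc: "canon K pr' (Pm pr m) SL = canon K pr (Pm pr m) SL" by (rule canon_cong(1)[OF rv c])
  show ?thesis unfolding pm_def Let_def unfolding P unfolding cc unfolding e by simp
qed

lemma med_IC:
  assumes v: "valid_prof K pr" and v': "valid_prof K pr'" and m: "m \<in> Ms K"
    and t: "truthful_med K c pr m" and o: "others_same_med K pr pr' m"
  shows "med_util K c pr' m \<le> med_util K c pr m"
proof (cases "pm K pr m")
  case None
  then have "pm K pr' m = None" using osm_pm[OF v v' o] by simp
  then show ?thesis using med_util_None[OF v' m] med_IR[OF v m t] by simp
next
  case (Some q)
  have s': "pm K pr' m = Some q" using osm_pm[OF v v' o] Some by simp
  have qP: "q \<in> Pm pr m" using pm_Some(2)[OF v Some] .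
  then have qU: "q \<in> Us K" using valid_sub[OF v] by blast
  have rq: "rc pr' q = rc pr q" using o qP valid_sub[OF v] unfolding others_same_med_def usersof_def by auto
  define f where "f p = rc pr q - c p" for p
  define H where "H = hatP K pr m"
  define H' where "H' = hatP K pr' m"
  define U where "U = usersof K m"
  have finU': "finite U" unfolding U_def by (rule fin_usersof)
  have H'U: "H' \<subseteq> U" unfolding H'_def U_def using hatP_sub by blast
  have HU: "H \<subseteq> U" unfolding H_def U_def using hatP_sub by blast
  have fH': "finite H'" using H'U finU' finite_subset by blast
  have fH: "finite H" using HU finU' finite_subset by blast
  have Hnn: "\<And>p. p \<in> H \<Longrightarrow> 0 \<le> f p"
  proof -
    fix p assume p: "p \<in> H"
    have "ukey pr p < ukey pr q" using hatP_lt[OF v Some] p H_def by blast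
    then have "rc pr p \<le> rc pr q" using rc_le_of_key by (meson less_imp_le)
    moreover have "rc pr p = c p" using t p HU U_def unfolding truthful_med_def by blast
    ultimately show "0 \<le> f p" unfolding f_def by simp
  qed
  have posH: "{p\<in>U. 0 < f p} \<subseteq> H"
  proof
    fix p assume p: "p \<in> {p\<in>U. 0 < f p}"
    then have pU: "p \<in> Us K" "p \<in> usersof K m" using U_def usersof_sub by auto
    have "rc pr p = c p" using t pU unfolding truthful_med_def by blast
    then have "rc pr p < rc pr q" using p f_def by simp
    then have "user_less K pr p q" unfolding user_less_def by simp
    moreover have "p \<in> rP pr" using t pU unfolding truthful_med_def by blast
    ultimately show "p \<in> H" unfolding H_def hatP_Some[OF Some] using pU by auto
  qed
  have "sum f H' = sum f (H' \<inter> {p. 0 < f p}) + sum f (H' - {p. 0 < f p})"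
    using sum.Int_Diff[OF fH'] by blast
  also have "sum f (H' - {p. 0 < f p}) \<le> 0" by (intro sum_nonpos) auto
  also have "sum f (H' \<inter> {p. 0 < f p}) \<le> sum f {p\<in>U. 0 < f p}"
    using H'U finU' by (intro sum_mono2) auto
  also have "sum f {p\<in>U. 0 < f p} \<le> sum f H"
    using posH fH Hnn by (intro sum_mono2) auto
  finally have "sum f H' \<le> sum f H" by simp
  moreover have "med_util K c pr' m = sum f H'"
    unfolding med_util_Some[OF v' m s'] rq H'_def f_def by simp
  moreover have "med_util K c pr m = sum f H"
    unfolding med_util_Some[OF v m Some] H_def f_def by simp
  ultimately show ?thesis by simp
qed

end

context mk begin

definition sba :: "('u,'a) prof \<Rightarrow> ('u,'a) prof \<Rightarrow> 'a \<Rightarrow> bool" where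
  "sba prl prh a \<longleftrightarrow> rP prh = rP prl \<and> rc prh = rc prl \<and> rk prh = rk prl \<and>
     (\<forall>b. b \<noteq> a \<longrightarrow> rv prh b = rv prl b)"

lemma sba_ukey: "sba prl prh a \<Longrightarrow> ukey prh = ukey prl"
  unfolding sba_def ukey_def by auto

lemma beats_other: "sba prl prh a \<Longrightarrow> fst b \<noteq> a \<Longrightarrow> slot_beats_user K prh b p = slot_beats_user K prl b p"
  unfolding sba_def beats_iff by auto

lemma beats_a_mono: "sba prl prh a \<Longrightarrow> rv prl a \<le> rv prh a \<Longrightarrow> fst b = a \<Longrightarrow>
    slot_beats_user K prl b p \<Longrightarrow> slot_beats_user K prh b p"
  unfolding sba_def beats_iff by auto

lemma beats_a_all: "fst b = a \<Longrightarrow> fst b' = a \<Longrightarrow> slot_beats_user K pr b p = slot_beats_user K pr b' p"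
  unfolding beats_iff by auto

lemma beta_l_le_h:
  assumes "sba prl prh a" "rv prl a \<le> rv prh a"
  shows "beta prl p \<le> beta prh p"
  unfolding beta_def
proof (rule card_mono[OF finSL[THEN finite_subset[rotated]]])
  show "{b \<in> SL. slot_beats_user K prh b p} \<subseteq> SL" by blast
  show "{b \<in> SL. slot_beats_user K prl b p} \<subseteq> {b \<in> SL. slot_beats_user K prh b p}"
  proof
    fix b assume h: "b \<in> {b \<in> SL. slot_beats_user K prl b p}"
    have "slot_beats_user K prh b p"
    proof (cases "fst b = a")
      case True
      then show ?thesis using beats_a_mono[OF assms True] h by blast
    next
      case False
      then show ?thesis using beats_other[OF assms(1) False] h by blast
    qed
    then show "b \<in> {b \<in> SL. slot_beats_user K prh b p}" using h by blast
  qed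
qed

lemma card_slots_a: "a \<in> As K \<Longrightarrow> card (slots K {a}) \<le> g"
proof -
  assume a: "a \<in> As K"
  have "slots K {a} = (\<lambda>i. (a,i)) ` {..<cap K a}" unfolding slots_def by auto
  then have "card (slots K {a}) = cap K a" by (simp add: card_image inj_on_def)
  then show ?thesis using capg a by auto
qed

lemma beats_h_sub:
  assumes s: "sba prl prh a"
  shows "{b\<in>SL. slot_beats_user K prh b p} \<subseteq> {b\<in>SL. slot_beats_user K prl b p} \<union> slots K {a}"
proof
  fix b assume h: "b \<in> {b\<in>SL. slot_beats_user K prh b p}"
  show "b \<in> {b\<in>SL. slot_beats_user K prl b p} \<union> slots K {a}"
  proof (cases "fst b = a")
    case True
    then have "b \<in> slots K {a}" using h SL_iff unfolding slots_def by (cases b) auto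
    then show ?thesis by blast
  next
    case False
    then show ?thesis using beats_other[OF s False] h by blast
  qed
qed

lemma beta_h_le_l:
  assumes s: "sba prl prh a" and a: "a \<in> As K"
  shows "beta prh p \<le> beta prl p + g"
proof -
  have "{b\<in>SL. slot_beats_user K prh b p} \<subseteq> {b\<in>SL. slot_beats_user K prl b p} \<union> slots K {a}"
    using beats_h_sub[OF s] .
  then have "beta prh p \<le> card ({b\<in>SL. slot_beats_user K prl b p} \<union> slots K {a})"
    unfolding beta_def by (intro card_mono) (auto intro: finite_slots simp: finSL)
  also have "\<dots> \<le> beta prl p + card (slots K {a})" unfolding beta_def by (rule card_Un_le)
  finally show ?thesis using card_slots_a[OF a] by simp
qed

lemma sba_valid_sub: "sba prl prh a \<Longrightarrow> rP prh = rP prl" unfolding sba_def by simp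

lemma Lc_l_le_h:
  assumes vl: "valid_prof K prl" and vh: "valid_prof K prh" and s: "sba prl prh a"
    and le: "rv prl a \<le> rv prh a" and P: "P' \<subseteq> rP prl"
  shows "Lc prl P' \<le> Lc prh P'"
proof -
  have Ph: "P' \<subseteq> rP prh" using P sba_valid_sub[OF s] by simp
  have "G prl P' \<subseteq> G prh P'"
    unfolding G_def sba_ukey[OF s] using beta_l_le_h[OF s le] order_less_le_trans by fastforce
  then show ?thesis unfolding Lc_G[OF vl P] Lc_G[OF vh Ph]
    using finP[OF vh Ph] G_def by (intro card_mono) auto
qed

lemma Lc_h_le_l:
  assumes vl: "valid_prof K prl" and vh: "valid_prof K prh" and s: "sba prl prh a"
    and a: "a \<in> As K" and P: "P' \<subseteq> rP prl"
  shows "Lc prh P' \<le> Lc prl P' + g"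
proof (rule ccontr)
  assume "\<not> ?thesis"
  then have lt: "Lc prl P' + g < Lc prh P'" by simp
  define L where "L = Lc prh P'"
  define k where "k = L - g - 1"
  have Ph: "P' \<subseteq> rP prh" using P sba_valid_sub[OF s] by simp
  have fin: "finite P'" using finP[OF vl P] .
  have uk: "ukey prh = ukey prl" using sba_ukey[OF s] .
  have L1: "L - 1 < card P'" using Lc_le[OF vh Ph] lt L_def by simp
  obtain p where p: "p \<in> P'" "ur prh P' p = L - 1" "L - 1 < Lc prh P' \<longleftrightarrow> L - 1 < beta prh p"
    using Lc_ge_iff[OF vh Ph L1] by blast
  have bp: "L - 1 < beta prh p" using p(3) L_def lt by simp
  have k1: "k < card P'" using L1 k_def by simp
  obtain q where q: "q \<in> P'" "ur prl P' q = k" "k < Lc prl P' \<longleftrightarrow> k < beta prl q"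
    using Lc_ge_iff[OF vl P k1] by blast
  have "\<not> ukey prl p < ukey prl q"
    using rnkf_less[OF fin p(1) q(1), of "ukey prl"] p(2) q(2) uk k_def by auto
  then have "ukey prl q \<le> ukey prl p" by simp
  then have "beta prl p \<le> beta prl q" using beta_mono by blast
  moreover have "beta prh p \<le> beta prl p + g" using beta_h_le_l[OF s a] .
  ultimately have "k < Lc prl P'" using q(3) bp k_def lt L_def by linarith
  then show False using lt k_def L_def by linarith
qed

lemma pm_same_if_Lc:
  assumes vl: "valid_prof K prl" and vh: "valid_prof K prh" and s: "sba prl prh a"
    and e: "Lc prl (Pm prl m) = Lc prh (Pm prl m)"
  shows "pm K prl m = pm K prh m"
  using e unfolding pm_char[OF vl] pm_char[OF vh] sba_valid_sub[OF s] sba_ukey[OF s] by simp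

lemma change:
  assumes vl: "valid_prof K prl" and vh: "valid_prof K prh" and s: "sba prl prh a"
    and le: "rv prl a \<le> rv prh a" and a: "a \<in> As K" and m: "m \<in> Ms K"
    and ne: "pm K prl m \<noteq> pm K prh m"
  obtains Ob where "Ob \<subseteq> SL" "\<And>b. b \<in> Ob \<Longrightarrow> fst b \<noteq> a"
    "nitems K prl < card Ob" "nitems K prh < card Ob"
    "\<And>b. b \<in> Ob \<Longrightarrow> rv prl a \<le> rv prl (fst b)"
    "\<And>b i. b \<in> Ob \<Longrightarrow> skey prl b < skey prl (a,i)"
proof -
  define P where "P = Pm prl m"
  have PP: "P \<subseteq> rP prl" unfolding P_def by blast
  have Ph: "P \<subseteq> rP prh" using PP sba_valid_sub[OF s] by simp
  have uk: "ukey prh = ukey prl" using sba_ukey[OF s] .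
  have Pmh: "Pm prh m = P" unfolding P_def sba_valid_sub[OF s] ..
  define k where "k = Lc prl P"
  have neq: "Lc prl P \<noteq> Lc prh P" using pm_same_if_Lc[OF vl vh s] ne P_def by blast
  have kh: "k < Lc prh P" using Lc_l_le_h[OF vl vh s le PP] neq k_def by simp
  have hg: "4 * g < Lc prh P"
  proof (rule ccontr)
    assume "\<not> 4 * g < Lc prh P"
    then have "pm K prh m = None" "pm K prl m = None" using pm_None[OF vh] pm_None[OF vl] Pmh kh P_def k_def by auto
    then show False using ne by simp
  qed
  have k3: "3 * g < k" using Lc_h_le_l[OF vl vh s a PP] hg k_def by linarith
  have kc: "k < card P" using Lc_le[OF vh Ph] kh by simp
  obtain p where p: "p \<in> P" "ur prl P p = k" "k < Lc prl P \<longleftrightarrow> k < beta prl p"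
    using Lc_ge_iff[OF vl PP kc] by blast
  have bl: "beta prl p \<le> k" using p(3) k_def by simp
  have bh: "k < beta prh p" using Lc_char[OF vh Ph p(1)] p(2) uk kh by simp
  have nba: "\<not> slot_beats_user K prl b p" if "fst b = a" for b
  proof
    assume h: "slot_beats_user K prl b p"
    have "{b\<in>SL. slot_beats_user K prh b p} \<subseteq> {b\<in>SL. slot_beats_user K prl b p}"
    proof
      fix b' assume b': "b' \<in> {b\<in>SL. slot_beats_user K prh b p}"
      show "b' \<in> {b\<in>SL. slot_beats_user K prl b p}"
      proof (cases "fst b' = a")
        case True
        then show ?thesis using b' h beats_a_all[OF True that] by auto
      next
        case False
        then show ?thesis using b' beats_other[OF s False] by auto
      qed
    qed
    then have "beta prh p \<le> beta prl p" unfolding beta_def using finSL by (intro card_mono) auto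
    then show False using bl bh by simp
  qed
  define Ob where "Ob = {b\<in>SL. slot_beats_user K prl b p}"
  have Ob1: "Ob \<subseteq> SL" unfolding Ob_def by auto
  have Ob2: "\<And>b. b \<in> Ob \<Longrightarrow> fst b \<noteq> a" using nba Ob_def by blast
  have "beta prh p \<le> card Ob + g"
  proof -
    have "{b\<in>SL. slot_beats_user K prh b p} \<subseteq> Ob \<union> slots K {a}"
      unfolding Ob_def using beats_h_sub[OF s] .
    then have "beta prh p \<le> card (Ob \<union> slots K {a})"
      unfolding beta_def using finSL Ob1 by (intro card_mono) (auto intro: finite_slots finite_subset)
    also have "\<dots> \<le> card Ob + card (slots K {a})" by (rule card_Un_le)
    finally show ?thesis using card_slots_a[OF a] by simp
  qed
  then have cO: "k + 1 \<le> card Ob + g" using bh by simp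
  have cU: "card (rP prl - P) \<le> g"
  proof -
    have "rP prl - P \<subseteq> usersof K m" unfolding P_def by blast
    then have "card (rP prl - P) \<le> card (usersof K m)" using fin_usersof card_mono by blast
    then show ?thesis using usg m by auto
  qed
  have Ll: "Lc prl (rP prl) \<le> k + g" using Lc_rem[OF vl PP subset_refl cU] k_def by simp
  have Lh: "Lc prh (rP prl) \<le> k + 2 * g" using Lc_h_le_l[OF vl vh s a subset_refl] Ll by simp
  have n1: "nitems K prl < card Ob"
    using items_bound[OF vl] Ll cO k3 by linarith
  have n2: "nitems K prh < card Ob"
    using items_bound[OF vh] Lh cO k3 sba_valid_sub[OF s] by (cases "nitems K prh = 0") auto
  have Ob5: "rv prl a \<le> rv prl (fst b)" if b: "b \<in> Ob" for b
  proof -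
    have "slot_beats_user K prl b p" using b Ob_def by auto
    moreover have "\<not> slot_beats_user K prl (a,0) p" by (rule nba) simp
    ultimately show ?thesis unfolding beats_iff by auto
  qed
  have Ob6: "skey prl b < skey prl (a,i)" if b: "b \<in> Ob" for b i
  proof -
    have bb: "slot_beats_user K prl b p" using b Ob_def by auto
    have "skey prl b \<noteq> skey prl (a,i)"
    proof
      assume "skey prl b = skey prl (a,i)"
      then have "rnk K (Inr (fst b)) = rnk K (Inr a)" unfolding skey_def by auto
      then have "fst b = a" using inr_inj a b Ob1 SL_iff by blast
      then show False using Ob2 b by blast
    qed
    moreover have "\<not> skey prl (a,i) < skey prl b" using beats_up[OF _ bb, of "(a,i)"] nba by auto
    ultimately show ?thesis by simp
  qed
  show ?thesis using that Ob1 Ob2 n1 n2 Ob5 Ob6 by blast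
qed

end

context mk begin

lemma adv_util_truth:
  assumes v: "valid_prof K pr" and t: "rv pr a = vt a"
  shows "adv_util K vt pr a = optw K pr (xall K pr) - optw K pr (xall K pr - Aa a)"
proof -
  have "optw K pr (xall K pr) = real (nwin K pr a) * rv pr a + sum (vval K pr) (winners K pr - Aa a)"
    unfolding optw_xall[OF v] using sum.Int_Diff[OF fin_winners, of "vval K pr" pr "Aa a"] sum_winners_Aa[OF v] by simp
  then show ?thesis unfolding adv_util_eq[OF v] using t by simp
qed

lemma winners_sub_xall: "winners K pr \<subseteq> xall K pr" unfolding winners_def by auto

lemma adv_IC_same:
  assumes v: "valid_prof K pr" and v': "valid_prof K pr'" and t: "rv pr a = vt a"
    and s: "sba pr pr' a" and same: "\<forall>m\<in>Ms K. pm K pr m = pm K pr' m"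
  shows "adv_util K vt pr' a \<le> adv_util K vt pr a"
proof -
  have ul: "user_less K pr' = user_less K pr"
    using s unfolding sba_def by (intro ext) (simp add: user_less_def)
  have hp: "hatP K pr' m = hatP K pr m" if "m \<in> Ms K" for m
  proof -
    have e1: "rP pr' = rP pr" using s unfolding sba_def by simp
    have e2: "pm K pr' m = pm K pr m" using same that by simp
    show ?thesis unfolding hatP_def ul e1 e2 ..
  qed
  have it: "items K pr' = items K pr" unfolding items_def using hp by auto
  have n: "nitems K pr' = nitems K pr" unfolding nitems_def it ..
  have cmq: "cm K pr' m = cm K pr m" if "m \<in> Ms K" for m
  proof -
    have e1: "rc pr' = rc pr" using s unfolding sba_def by simp
    have e2: "pm K pr' m = pm K pr m" using same that by simp
    show ?thesis unfolding cm_def e1 e2 ..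
  qed
  have dv: "dval K pr' = dval K pr" unfolding dval_def using cmq by (metis (no_types, lifting))
  have xa: "xall K pr' = xall K pr" unfolding xall_def n ..
  have vv: "vval K pr' x = vval K pr x" if "x \<in> xall K pr - Aa a" for x
  proof (cases x)
    case (RS b)
    then have "fst b \<noteq> a" using that xall_iff[of x pr] SL_iff unfolding slots_def by (cases b) auto
    then show ?thesis using RS s unfolding sba_def by (cases b) auto
  next
    case (DS j)
    then show ?thesis using dv by simp
  qed
  have ow: "optw K pr' (xall K pr - Aa a) = optw K pr (xall K pr - Aa a)"
  proof -
    have "(\<lambda>Z. \<Sum>z\<in>Z. vval K pr' z) ` {Z. Z \<subseteq> xall K pr - Aa a \<and> card Z \<le> nitems K pr'} =
          (\<lambda>Z. \<Sum>z\<in>Z. vval K pr z) ` {Z. Z \<subseteq> xall K pr - Aa a \<and> card Z \<le> nitems K pr}"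
      unfolding n using vv by (intro image_cong refl) (auto intro!: sum.cong)
    then show ?thesis unfolding optw_def by simp
  qed
  define W where "W = winners K pr'"
  have Wx: "W \<subseteq> xall K pr" unfolding W_def using winners_sub_xall xa by blast
  have fW: "finite W" unfolding W_def by (rule fin_winners)
  have cW: "card W = nitems K pr" unfolding W_def card_winners n ..
  have "sum (vval K pr) (W \<inter> Aa a) = real (nwin K pr' a) * vt a"
  proof -
    have "sum (vval K pr) (W \<inter> Aa a) = sum (\<lambda>x. vt a) (W \<inter> Aa a)"
      using t unfolding slots_def by (intro sum.cong) auto
    then show ?thesis using card_winners_Aa[OF v'] W_def by simp
  qed
  moreover have "sum (vval K pr) (W - Aa a) = sum (vval K pr') (W - Aa a)"
    using vv Wx by (intro sum.cong) auto
  moreover have "sum (vval K pr) W = sum (vval K pr) (W \<inter> Aa a) + sum (vval K pr) (W - Aa a)"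
    using sum.Int_Diff[OF fW] by blast
  moreover have "sum (vval K pr) W \<le> optw K pr (xall K pr)"
    using optw_ge[OF finite_xall Wx] cW by simp
  ultimately have "real (nwin K pr' a) * vt a + sum (vval K pr') (W - Aa a) \<le> optw K pr (xall K pr)"
    by simp
  then show ?thesis unfolding adv_util_truth[where vt=vt, OF v t] adv_util_eq[OF v'] W_def[symmetric] xa ow by simp
qed

lemma adv_IC_low:
  assumes v: "valid_prof K pr" and v': "valid_prof K pr'" and t: "rv pr a = vt a"
    and s: "sba pr' pr a" and lt: "rv pr' a \<le> rv pr a" and a: "a \<in> As K"
    and m: "m \<in> Ms K" and ne: "pm K pr' m \<noteq> pm K pr m"
  shows "adv_util K vt pr' a \<le> adv_util K vt pr a"
proof -
  obtain Ob where Ob: "Ob \<subseteq> SL" "\<And>b. b \<in> Ob \<Longrightarrow> fst b \<noteq> a"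
    "nitems K pr' < card Ob" "nitems K pr < card Ob"
    "\<And>b. b \<in> Ob \<Longrightarrow> rv pr' a \<le> rv pr' (fst b)"
    "\<And>b i. b \<in> Ob \<Longrightarrow> skey pr' b < skey pr' (a,i)"
    using change[OF v' v s lt a m ne] by blast
  have noA: "winners K pr' \<inter> Aa a = {}"
  proof (rule ccontr)
    assume "winners K pr' \<inter> Aa a \<noteq> {}"
    then obtain i where w: "RS (a,i) \<in> winners K pr'" unfolding slots_def by auto
    have ax: "RS (a,i) \<in> xall K pr'" using w winners_sub_xall by blast
    have "RS ` Ob \<subseteq> {y\<in>xall K pr'. vkey pr' y < vkey pr' (RS (a,i))}"
      using Ob(1,6) xall_iff vkey_RS by auto
    then have "card (RS ` Ob) \<le> rnkf (vkey pr') (xall K pr') (RS (a,i))"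
      unfolding rnkf_def using finite_xall by (intro card_mono) auto
    moreover have "card (RS ` Ob) = card Ob" by (simp add: card_image inj_on_def)
    moreover have "rnkf (vkey pr') (xall K pr') (RS (a,i)) < nitems K pr'"
      using w winners_rnk by auto
    ultimately show False using Ob(3) by simp
  qed
  then have nw: "nwin K pr' a = 0" using card_winners_Aa[OF v', of a] by simp
  have "winners K pr' \<subseteq> xall K pr' - Aa a" using noA winners_sub_xall by blast
  then have "sum (vval K pr') (winners K pr') \<le> optw K pr' (xall K pr' - Aa a)"
    using optw_ge[OF finite_Diff[OF finite_xall]] card_winners by simp
  then have "adv_util K vt pr' a \<le> 0" unfolding adv_util_eq[OF v'] nw using noA
    by (simp add: Diff_triv)
  then show ?thesis using adv_IR[where vt=vt, OF v t] by simp
qed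

lemma adv_IC_high:
  assumes v: "valid_prof K pr" and v': "valid_prof K pr'" and t: "rv pr a = vt a"
    and s: "sba pr pr' a" and le: "rv pr a \<le> rv pr' a" and a: "a \<in> As K"
    and m: "m \<in> Ms K" and ne: "pm K pr m \<noteq> pm K pr' m"
  shows "adv_util K vt pr' a \<le> adv_util K vt pr a"
proof -
  obtain Ob where Ob: "Ob \<subseteq> SL" "\<And>b. b \<in> Ob \<Longrightarrow> fst b \<noteq> a"
    "nitems K pr < card Ob" "nitems K pr' < card Ob"
    "\<And>b. b \<in> Ob \<Longrightarrow> rv pr a \<le> rv pr (fst b)"
    "\<And>b i. b \<in> Ob \<Longrightarrow> skey pr b < skey pr (a,i)"
    using change[OF v v' s le a m ne] by blast
  define W where "W = winners K pr'"
  define n where "n = nitems K pr'"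
  define k where "k = nwin K pr' a"
  have fW: "finite W" unfolding W_def by (rule fin_winners)
  have cWA: "card (W - Aa a) + k = n" unfolding W_def k_def n_def by (rule card_winners_diff[OF v'])
  have RO: "RS ` Ob \<subseteq> xall K pr' - Aa a" using Ob(1) Ob(2) unfolding xall_def slots_def by fastforce
  have cRO: "card (RS ` Ob) = card Ob" by (simp add: card_image inj_on_def)
  have finRO: "finite (RS ` Ob)" using Ob(1) finSL finite_subset by blast
  have "RS ` Ob \<inter> W \<subseteq> W - Aa a" using RO by blast
  then have "card (RS ` Ob \<inter> W) \<le> card (W - Aa a)" using fW by (intro card_mono) auto
  moreover have "card (RS ` Ob - W) = card (RS ` Ob) - card (RS ` Ob \<inter> W)"
    using card_Diff_subset_Int finRO by (metis Diff_Int2 card_Diff_subset_Int finite_Int inf.cobounded1 inf_commute)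
  ultimately have "k \<le> card (RS ` Ob - W)" using cRO Ob(4) cWA n_def by linarith
  then obtain D where D: "D \<subseteq> RS ` Ob - W" "card D = k"
    using obtain_subset_with_card_n by blast
  have finD: "finite D" using D finRO finite_subset by blast
  have DW: "D \<inter> (W - Aa a) = {}" using D by blast
  have fWA: "finite (W - Aa a)" using fW by blast
  have Zs: "(W - Aa a) \<union> D \<subseteq> xall K pr' - Aa a" using D RO winners_sub_xall W_def by blast
  have Zc: "card ((W - Aa a) \<union> D) = n" using card_Un_disjoint[OF fWA finD] DW D cWA by (simp add: Int_commute)
  have Dv: "real k * vt a \<le> sum (vval K pr') D"
  proof -
    have "vt a \<le> vval K pr' x" if x: "x \<in> D" for x
    proof -
      obtain b where b: "b \<in> Ob" "x = RS b" using x D by blast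
      have "rv pr' (fst b) = rv pr (fst b)" using s Ob(2)[OF b(1)] unfolding sba_def by auto
      then show ?thesis using Ob(5)[OF b(1)] t b(2) by (cases b) auto
    qed
    then show ?thesis using sum_bounded_below[of D "vt a" "vval K pr'"] D(2) by simp
  qed
  have "sum (vval K pr') ((W - Aa a) \<union> D) \<le> optw K pr' (xall K pr' - Aa a)"
    using optw_ge[OF finite_Diff[OF finite_xall] Zs] Zc n_def by simp
  moreover have "sum (vval K pr') ((W - Aa a) \<union> D) = sum (vval K pr') (W - Aa a) + sum (vval K pr') D"
    using sum.union_disjoint[OF fWA finD] DW by (simp add: Int_commute)
  ultimately have "adv_util K vt pr' a \<le> 0"
    unfolding adv_util_eq[OF v'] using Dv k_def W_def by simp
  then show ?thesis using adv_IR[where vt=vt, OF v t] by simp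
qed

lemma adv_IC:
  assumes v: "valid_prof K pr" and v': "valid_prof K pr'" and a: "a \<in> As K"
    and t: "truthful_adv vt pr a" and o: "others_same_adv pr pr' a"
  shows "adv_util K vt pr' a \<le> adv_util K vt pr a"
proof -
  have t': "rv pr a = vt a" using t unfolding truthful_adv_def .
  have s1: "sba pr pr' a" using o unfolding others_same_adv_def sba_def by auto
  have s2: "sba pr' pr a" using o unfolding others_same_adv_def sba_def by auto
  show ?thesis
  proof (cases "\<forall>m\<in>Ms K. pm K pr m = pm K pr' m")
    case True
    then show ?thesis using adv_IC_same[where vt=vt, OF v v' t' s1] by blast
  next
    case False
    then obtain m where m: "m \<in> Ms K" "pm K pr m \<noteq> pm K pr' m" by blast
    show ?thesis
    proof (cases "rv pr a \<le> rv pr' a")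
      case True
      then show ?thesis using adv_IC_high[where vt=vt, OF v v' t' s1 True a m(1)] m(2) by blast
    next
      case False
      then show ?thesis using adv_IC_low[where vt=vt, OF v v' t' s2 _ a m(1)] m(2) by simp
    qed
  qed
qed

end

lemma avg_lemma:
  fixes f :: "nat \<Rightarrow> real"
  assumes anti: "\<And>i j. i \<le> j \<Longrightarrow> j < n \<Longrightarrow> f j \<le> f i" and k: "k \<le> n"
  shows "real k * sum f {..<n} \<le> real n * sum f {..<k}"
proof (cases "k = n")
  case True then show ?thesis by simp
next
  case False
  then have kn: "k < n" using k by simp
  define t where "t = f k"
  define A where "A = sum f {..<k}"
  define R where "R = sum f {k..<n}"
  have split: "sum f {..<n} = A + R"
    unfolding A_def R_def using sum.atLeastLessThan_concat[of 0 k n f] k by (simp add: atLeast0LessThan)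
  have "real k * t \<le> A"
  proof -
    have "\<forall>i\<in>{..<k}. t \<le> f i" using anti kn t_def by auto
    then show ?thesis using sum_bounded_below[of "{..<k}" t f] A_def by simp
  qed
  moreover have "R \<le> real (n - k) * t"
  proof -
    have "\<forall>i\<in>{k..<n}. f i \<le> t" using anti t_def by auto
    then show ?thesis using sum_bounded_above[of "{k..<n}" f t] R_def by simp
  qed
  ultimately have "real k * R \<le> real (n - k) * A"
  proof -
    assume h1: "real k * t \<le> A" and h2: "R \<le> real (n - k) * t"
    have "real k * R \<le> real k * (real (n - k) * t)" using h2 by (intro mult_left_mono) auto
    also have "\<dots> = real (n - k) * (real k * t)" by simp
    also have "\<dots> \<le> real (n - k) * A" using h1 by (intro mult_left_mono) auto
    finally show ?thesis .
  qed
  moreover have "real (n - k) = real n - real k" using k by simp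
  ultimately show ?thesis unfolding split A_def[symmetric] by (simp add: algebra_simps)
qed

lemma sum_le_more:
  fixes f :: "nat \<Rightarrow> real"
  assumes "m \<le> n" "\<And>i. m \<le> i \<Longrightarrow> i < n \<Longrightarrow> 0 \<le> f i"
  shows "sum f {..<m} \<le> sum f {..<n}"
  using assms by (intro sum_mono2) auto

lemma sum_le_less:
  fixes f :: "nat \<Rightarrow> real"
  assumes "n \<le> m" "\<And>i. n \<le> i \<Longrightarrow> i < m \<Longrightarrow> f i \<le> 0"
  shows "sum f {..<m} \<le> sum f {..<n}"
proof -
  have "sum f {..<m} = sum f {..<n} + sum f {n..<m}"
    using sum.atLeastLessThan_concat[of 0 n m f] assms(1) by (simp add: atLeast0LessThan)
  moreover have "sum f {n..<m} \<le> 0" using assms by (intro sum_nonpos) auto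
  ultimately show ?thesis by simp
qed

context mk begin

definition usr :: "('u,'a) prof \<Rightarrow> nat \<Rightarrow> 'u" where
  "usr pr i = (THE p. p \<in> rP pr \<and> ur pr (rP pr) p = i)"

definition slt :: "('u,'a) prof \<Rightarrow> nat \<Rightarrow> 'a \<times> nat" where
  "slt pr i = (THE b. b \<in> SL \<and> rnkf (skey pr) SL b = i)"

definition gi :: "('u,'a) prof \<Rightarrow> nat \<Rightarrow> real" where
  "gi pr i = rv pr (fst (slt pr i)) - rc pr (usr pr i)"

lemma usr:
  assumes v: "valid_prof K pr" and i: "i < card (rP pr)"
  shows "usr pr i \<in> rP pr" "ur pr (rP pr) (usr pr i) = i"
proof -
  have "\<exists>!p. p \<in> rP pr \<and> ur pr (rP pr) p = i"
    using rnkf_ex1[OF valid_fin[OF v] ukey_inj[OF v] i] .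
  then have "usr pr i \<in> rP pr \<and> ur pr (rP pr) (usr pr i) = i" unfolding usr_def by (rule theI')
  then show "usr pr i \<in> rP pr" "ur pr (rP pr) (usr pr i) = i" by auto
qed

lemma usr_unique:
  assumes v: "valid_prof K pr" and p: "p \<in> rP pr"
  shows "usr pr (ur pr (rP pr) p) = p"
proof -
  have i: "ur pr (rP pr) p < card (rP pr)" using rnkf_lt_card[OF valid_fin[OF v] p] .
  show ?thesis using usr[OF v i] rnkf_eq_iff[OF valid_fin[OF v] ukey_inj[OF v]] p by blast
qed

lemma slt:
  assumes i: "i < card SL"
  shows "slt pr i \<in> SL" "rnkf (skey pr) SL (slt pr i) = i"
proof -
  have "\<exists>!b. b \<in> SL \<and> rnkf (skey pr) SL b = i"
    using rnkf_ex1[OF finSL skey_inj i] .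
  then have "slt pr i \<in> SL \<and> rnkf (skey pr) SL (slt pr i) = i" unfolding slt_def by (rule theI')
  then show "slt pr i \<in> SL" "rnkf (skey pr) SL (slt pr i) = i" by auto
qed

lemma slt_unique:
  assumes b: "b \<in> SL"
  shows "slt pr (rnkf (skey pr) SL b) = b"
proof -
  have i: "rnkf (skey pr) SL b < card SL" using rnkf_lt_card[OF finSL b] .
  show ?thesis using slt[OF i] rnkf_eq_iff[OF finSL skey_inj] b by blast
qed

lemma usr_mono:
  assumes v: "valid_prof K pr" and ij: "i \<le> j" "j < card (rP pr)"
  shows "rc pr (usr pr i) \<le> rc pr (usr pr j)"
proof -
  have i: "i < card (rP pr)" using ij by simp
  have "\<not> ukey pr (usr pr j) < ukey pr (usr pr i)"
    using rnkf_less[OF valid_fin[OF v] usr(1)[OF v ij(2)] usr(1)[OF v i], of "ukey pr"]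
      usr(2)[OF v ij(2)] usr(2)[OF v i] ij by auto
  then have "ukey pr (usr pr i) \<le> ukey pr (usr pr j)" by simp
  then show ?thesis by (rule rc_le_of_key)
qed

lemma slt_mono:
  assumes ij: "i \<le> j" "j < card SL"
  shows "rv pr (fst (slt pr j)) \<le> rv pr (fst (slt pr i))"
proof -
  have i: "i < card SL" using ij by simp
  have "\<not> skey pr (slt pr j) < skey pr (slt pr i)"
    using rnkf_less[OF finSL slt(1)[OF ij(2), of pr] slt(1)[OF i, of pr], of "skey pr"]
      slt(2)[OF ij(2), of pr] slt(2)[OF i, of pr] ij by auto
  then have "skey pr (slt pr i) \<le> skey pr (slt pr j)" by simp
  then have "fst (skey pr (slt pr i)) \<le> fst (skey pr (slt pr j))" by (rule key_fst_le)
  then show ?thesis unfolding skey_def by simp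
qed

lemma tau_le:
  assumes v: "valid_prof K pr"
  shows "Lc pr (rP pr) \<le> card (rP pr)" "Lc pr (rP pr) \<le> card SL"
proof -
  show "Lc pr (rP pr) \<le> card (rP pr)" using Lc_le[OF v subset_refl] .
  show "Lc pr (rP pr) \<le> card SL"
  proof (rule ccontr)
    assume "\<not> ?thesis"
    then have lt: "card SL < Lc pr (rP pr)" by simp
    then have c: "card SL < card (rP pr)" using Lc_le[OF v subset_refl] by simp
    have "card SL < beta pr (usr pr (card SL))"
      using Lc_char[OF v subset_refl usr(1)[OF v c]] usr(2)[OF v c] lt by simp
    then show False using beta_le by (metis not_le)
  qed
qed

lemma gi_pos:
  assumes v: "valid_prof K pr" and i: "i < Lc pr (rP pr)"
  shows "0 \<le> gi pr i"
proof -
  have ip: "i < card (rP pr)" and iS: "i < card SL" using tau_le[OF v] i by auto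
  have "i < beta pr (usr pr i)"
    using Lc_char[OF v subset_refl usr(1)[OF v ip]] usr(2)[OF v ip] i by simp
  then have "slot_beats_user K pr (slt pr i) (usr pr i)"
    using beats_pos[OF slt(1)[OF iS, of pr]] slt(2)[OF iS, of pr] by simp
  then show ?thesis unfolding gi_def beats_iff by auto
qed

lemma gi_neg:
  assumes v: "valid_prof K pr" and i: "Lc pr (rP pr) \<le> i" "i < card (rP pr)" "i < card SL"
  shows "gi pr i \<le> 0"
proof -
  have "\<not> i < beta pr (usr pr i)"
    using Lc_char[OF v subset_refl usr(1)[OF v i(2)]] usr(2)[OF v i(2)] i by simp
  then have "\<not> slot_beats_user K pr (slt pr i) (usr pr i)"
    using beats_pos[OF slt(1)[OF i(3), of pr]] slt(2)[OF i(3), of pr] by simp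
  then show ?thesis unfolding gi_def beats_iff by auto
qed

lemma gi_anti:
  assumes v: "valid_prof K pr" and ij: "i \<le> j" "j < Lc pr (rP pr)"
  shows "gi pr j \<le> gi pr i"
proof -
  have "j < card (rP pr)" "j < card SL" using tau_le[OF v] ij by auto
  then show ?thesis unfolding gi_def using usr_mono[OF v ij(1)] slt_mono[OF ij(1)] by smt
qed

lemma top_slots:
  assumes k: "k \<le> card SL"
  shows "{b\<in>SL. rnkf (skey pr) SL b < k} = slt pr ` {..<k}"
proof
  show "{b\<in>SL. rnkf (skey pr) SL b < k} \<subseteq> slt pr ` {..<k}"
    using slt_unique by (metis (no_types, lifting) imageI lessThan_iff mem_Collect_eq subsetI)
  show "slt pr ` {..<k} \<subseteq> {b\<in>SL. rnkf (skey pr) SL b < k}"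
    using slt k by auto
qed

lemma top_users:
  assumes v: "valid_prof K pr" and k: "k \<le> card (rP pr)"
  shows "{p\<in>rP pr. ur pr (rP pr) p < k} = usr pr ` {..<k}"
proof
  show "{p\<in>rP pr. ur pr (rP pr) p < k} \<subseteq> usr pr ` {..<k}"
    using usr_unique[OF v] by (metis (no_types, lifting) imageI lessThan_iff mem_Collect_eq subsetI)
  show "usr pr ` {..<k} \<subseteq> {p\<in>rP pr. ur pr (rP pr) p < k}"
    using usr[OF v] k by auto
qed

lemma inj_slt: "k \<le> card SL \<Longrightarrow> inj_on (slt pr) {..<k}"
  by (intro inj_onI) (metis lessThan_iff order_less_le_trans slt(2))

lemma inj_usr: "valid_prof K pr \<Longrightarrow> k \<le> card (rP pr) \<Longrightarrow> inj_on (usr pr) {..<k}"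
  by (intro inj_onI) (metis lessThan_iff order_less_le_trans usr(2))

lemma gain_nonneg:
  assumes v: "valid_prof K pr" and x: "(p,b) \<in> assign K pr"
  shows "rc pr p \<le> rv pr (fst b)"
proof -
  have p: "p \<in> items K pr" and b: "b \<in> WR pr" using x assign_eq[OF v] by auto
  then have n: "0 < nitems K pr" unfolding nitems_def using fin_items[OF v] card_gt_0_iff by blast
  obtain m where m: "m \<in> Ms K" "p \<in> hatP K pr m" using p unfolding items_def by blast
  then obtain q where q: "pm K pr m = Some q" using hatP_None by (cases "pm K pr m") auto
  have "ukey pr p < ukey pr q" using hatP_lt[OF v q m(2)] .
  then have "rc pr p \<le> rc pr q" using rc_le_of_key less_imp_le by blast
  also have "\<dots> \<le> dval K pr" using cm_le_dval[OF v m(1)] q unfolding cm_def by simp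
  also have "dval K pr \<le> rv pr (fst b)"
  proof -
    have w: "RS b \<in> winners K pr" using winners_eq[OF v] b by auto
    have d: "DS 0 \<in> xall K pr" using n xall_iff by auto
    have wx: "RS b \<in> xall K pr" using w winners_sub_xall by blast
    have "DS 0 \<notin> winners K pr" using DS_not_winner[OF v n] .
    then have "rnkf (vkey pr) (xall K pr) (RS b) < rnkf (vkey pr) (xall K pr) (DS 0)"
      using w d winners_rnk by auto
    then have "vkey pr (RS b) < vkey pr (DS 0)" using rnkf_less_iff[OF finite_xall vkey_inj wx d] by simp
    then have "fst (vkey pr (RS b)) \<le> fst (vkey pr (DS 0))" using key_fst_le less_imp_le by blast
    then show ?thesis unfolding vkey_fst by (cases b) simp
  qed
  finally show ?thesis .
qed

end

context mk begin

lemma truthful_facts: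
  assumes v: "valid_prof K pr" and tm: "\<forall>m\<in>Ms K. truthful_med K c pr m"
    and ta: "\<forall>a\<in>As K. truthful_adv vt pr a"
  shows "rP pr = Us K" "\<And>p. p \<in> Us K \<Longrightarrow> rc pr p = c p" "\<And>a. a \<in> As K \<Longrightarrow> rv pr a = vt a"
proof -
  show "rP pr = Us K"
  proof
    show "rP pr \<subseteq> Us K" using valid_sub[OF v] .
    show "Us K \<subseteq> rP pr"
    proof
      fix p assume p: "p \<in> Us K"
      then have "p \<in> usersof K (med K p)" unfolding usersof_def by simp
      moreover have "rP pr \<inter> usersof K (med K p) = usersof K (med K p)"
        using tm medM[OF p] unfolding truthful_med_def by blast
      ultimately show "p \<in> rP pr" by blast
    qed
  qed
  show "\<And>p. p \<in> Us K \<Longrightarrow> rc pr p = c p"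
  proof -
    fix p assume p: "p \<in> Us K"
    then have "p \<in> usersof K (med K p)" unfolding usersof_def by simp
    then show "rc pr p = c p" using tm medM[OF p] unfolding truthful_med_def by blast
  qed
  show "\<And>a. a \<in> As K \<Longrightarrow> rv pr a = vt a" using ta unfolding truthful_adv_def by blast
qed

lemma opt_le:
  assumes v: "valid_prof K pr" and tm: "\<forall>m\<in>Ms K. truthful_med K c pr m"
    and ta: "\<forall>a\<in>As K. truthful_adv vt pr a" and S: "is_assignment K S"
  shows "gft c vt S \<le> sum (gi pr) {..<Lc pr (rP pr)}"
proof -
  note tf = truthful_facts[OF v tm ta]
  have Ssub: "S \<subseteq> Us K \<times> SL" using S unfolding is_assignment_def by blast
  have finS: "finite S" using Ssub finU finSL finite_subset by (metis finite_SigmaI)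
  have injf: "inj_on fst S" and injs: "inj_on snd S"
    using S unfolding is_assignment_def inj_on_def by blast+
  define k where "k = card S"
  have cf: "card (fst ` S) = k" using card_image[OF injf] k_def by simp
  have cs: "card (snd ` S) = k" using card_image[OF injs] k_def by simp
  have fsub: "fst ` S \<subseteq> rP pr" using Ssub tf(1) by auto
  have ssub: "snd ` S \<subseteq> SL" using Ssub by auto
  have kP: "k \<le> card (rP pr)" using card_mono[OF valid_fin[OF v] fsub] cf by simp
  have kS: "k \<le> card SL" using card_mono[OF finSL ssub] cs by simp
  have "gft c vt S = (\<Sum>x\<in>S. rv pr (fst (snd x)) - rc pr (fst x))"
    unfolding gft_def using Ssub tf SL_iff by (intro sum.cong) auto
  also have "\<dots> = (\<Sum>x\<in>S. rv pr (fst (snd x))) - (\<Sum>x\<in>S. rc pr (fst x))" by (simp add: sum_subtractf)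
  also have "(\<Sum>x\<in>S. rv pr (fst (snd x))) = (\<Sum>b\<in>snd ` S. rv pr (fst b))"
    using sum.reindex[OF injs, of "\<lambda>b. rv pr (fst b)"] by simp
  also have "(\<Sum>x\<in>S. rc pr (fst x)) = (\<Sum>p\<in>fst ` S. rc pr p)"
    using sum.reindex[OF injf, of "rc pr"] by simp
  finally have g1: "gft c vt S = (\<Sum>b\<in>snd ` S. rv pr (fst b)) - (\<Sum>p\<in>fst ` S. rc pr p)" .
  have s1: "(\<Sum>b\<in>snd ` S. rv pr (fst b)) \<le> (\<Sum>i<k. rv pr (fst (slt pr i)))"
  proof -
    have "(\<Sum>b\<in>snd ` S. rv pr (fst b)) \<le> (\<Sum>b\<in>{b\<in>SL. rnkf (skey pr) SL b < k}. rv pr (fst b))"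
    proof (rule top_sum[OF finSL skey_inj _ ssub])
      show "\<And>x y. x \<in> SL \<Longrightarrow> y \<in> SL \<Longrightarrow> skey pr x < skey pr y \<Longrightarrow> rv pr (fst y) \<le> rv pr (fst x)"
      proof -
        fix x y assume "skey pr x < skey pr y"
        then have "fst (skey pr x) \<le> fst (skey pr y)" using key_fst_le less_imp_le by blast
        then show "rv pr (fst y) \<le> rv pr (fst x)" unfolding skey_def by simp
      qed
    qed (use cs kS in auto)
    also have "\<dots> = (\<Sum>i<k. rv pr (fst (slt pr i)))"
      unfolding top_slots[OF kS] using sum.reindex[OF inj_slt[OF kS], of "\<lambda>b. rv pr (fst b)"] by simp
    finally show ?thesis .
  qed
  have s2: "(\<Sum>i<k. rc pr (usr pr i)) \<le> (\<Sum>p\<in>fst ` S. rc pr p)"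
  proof -
    have "(\<Sum>p\<in>fst ` S. - rc pr p) \<le> (\<Sum>p\<in>{p\<in>rP pr. ur pr (rP pr) p < k}. - rc pr p)"
    proof (rule top_sum[OF valid_fin[OF v] ukey_inj[OF v] _ fsub])
      show "\<And>x y. x \<in> rP pr \<Longrightarrow> y \<in> rP pr \<Longrightarrow> ukey pr x < ukey pr y \<Longrightarrow> - rc pr y \<le> - rc pr x"
        using rc_le_of_key less_imp_le by fastforce
    qed (use cf kP in auto)
    also have "\<dots> = (\<Sum>i<k. - rc pr (usr pr i))"
      unfolding top_users[OF v kP] using sum.reindex[OF inj_usr[OF v kP], of "\<lambda>p. - rc pr p"] by simp
    finally show ?thesis by (simp add: sum_negf)
  qed
  have "gft c vt S \<le> sum (gi pr) {..<k}"
    using g1 s1 s2 unfolding gi_def by (simp add: sum_subtractf)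
  also have "\<dots> \<le> sum (gi pr) {..<Lc pr (rP pr)}"
  proof (cases "k \<le> Lc pr (rP pr)")
    case True
    then show ?thesis using gi_pos[OF v] by (intro sum_le_more) auto
  next
    case False
    then show ?thesis using gi_neg[OF v] kP kS by (intro sum_le_less) auto
  qed
  finally show ?thesis .
qed

lemma assign_ge:
  assumes v: "valid_prof K pr" and tm: "\<forall>m\<in>Ms K. truthful_med K c pr m"
    and ta: "\<forall>a\<in>As K. truthful_adv vt pr a" and big: "5 * g < Lc pr (rP pr)"
  shows "sum (gi pr) {..<Lc pr (rP pr) - 5 * g} \<le> gft c vt (assign K pr)"
proof -
  note tf = truthful_facts[OF v tm ta]
  define P where "P = rP pr"
  define \<tau> where "\<tau> = Lc pr P"
  define k0 where "k0 = \<tau> - 5 * g"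
  have fin: "finite P" using valid_fin[OF v] P_def by simp
  have injP: "inj_on (ukey pr) P" using ukey_inj[OF v] P_def by simp
  have tP: "\<tau> \<le> card P" "\<tau> \<le> card SL" using tau_le[OF v] P_def \<tau>_def by auto
  have k0P: "k0 \<le> card P" "k0 \<le> card SL" using tP k0_def by auto
  define U0 where "U0 = {p\<in>P. ur pr P p < k0}"
  have U0img: "U0 = usr pr ` {..<k0}" unfolding U0_def P_def using top_users[OF v] k0P P_def by simp
  have cU0: "card U0 = k0" unfolding U0_def using card_top[OF fin injP k0P(1)] .
  have U0I: "U0 \<subseteq> items K pr"
  proof
    fix p assume p: "p \<in> U0"
    then have pP: "p \<in> P" and pr0: "ur pr P p < k0" unfolding U0_def by auto
    have pU: "p \<in> Us K" using pP tf(1) P_def by simp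
    define m where "m = med K p"
    have m: "m \<in> Ms K" using medM[OF pU] m_def by simp
    have pm_: "p \<in> usersof K m" unfolding usersof_def m_def using pU by simp
    have cU: "card (rP pr - Pm pr m) \<le> g"
    proof -
      have "rP pr - Pm pr m \<subseteq> usersof K m" by blast
      then have "card (rP pr - Pm pr m) \<le> card (usersof K m)" using fin_usersof card_mono by blast
      then show ?thesis using usg m by auto
    qed
    have LL: "\<tau> \<le> Lc pr (Pm pr m) + g" using Lc_rem[OF v Pm_sub subset_refl cU] \<tau>_def P_def by simp
    have tt: "\<tau> = Lc pr (rP pr)" using \<tau>_def P_def by simp
    have "4 * g < Lc pr (Pm pr m)" using LL big tt g1 by linarith
    then obtain q where q: "pm K pr m = Some q" using pm_None[OF v, of m] by (cases "pm K pr m") auto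
    have qP: "q \<in> Pm pr m" and qr: "ur pr (Pm pr m) q = Lc pr (Pm pr m) - 4 * g - 1"
      using pm_Some[OF v q] by auto
    have "ukey pr p < ukey pr q"
    proof (rule ccontr)
      assume "\<not> ?thesis"
      moreover have "ukey pr p \<noteq> ukey pr q"
      proof
        assume "ukey pr p = ukey pr q"
        then have "p = q" using injP pP qP P_def inj_onD by fastforce
        then show False using qP pm_ by blast
      qed
      ultimately have lt: "ukey pr q < ukey pr p" by simp
      have "insert q {y\<in>Pm pr m. ukey pr y < ukey pr q} \<subseteq> {y\<in>P. ukey pr y < ukey pr p}"
        using lt qP P_def by auto
      then have "card (insert q {y\<in>Pm pr m. ukey pr y < ukey pr q}) \<le> ur pr P p"
        unfolding rnkf_def using fin by (intro card_mono) auto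
      moreover have "card (insert q {y\<in>Pm pr m. ukey pr y < ukey pr q}) = ur pr (Pm pr m) q + 1"
        unfolding rnkf_def using valid_fin[OF v] by (subst card_insert_disjoint) auto
      ultimately show False using qr pr0 k0_def LL by linarith
    qed
    then have "user_less K pr p q" using user_less_iff pU qP valid_sub[OF v] by blast
    then have "p \<in> hatP K pr m" unfolding hatP_Some[OF q] using pP pm_ P_def by simp
    then show "p \<in> items K pr" unfolding items_def using m by blast
  qed
  have nk: "k0 \<le> nitems K pr" unfolding nitems_def using card_mono[OF fin_items[OF v] U0I] cU0 by simp
  have IP: "items K pr \<subseteq> P" using items_sub P_def by simp
  have ur_items: "ur pr (items K pr) p = ur pr P p" if p: "p \<in> U0" for p
  proof (rule rnkf_prefix[OF IP])
    fix y assume y: "y \<in> P" "ukey pr y < ukey pr p"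
    have "ur pr P y < ur pr P p" using rnkf_less[OF fin y(1) _ y(2)] p U0_def by auto
    then have "y \<in> U0" using p y(1) U0_def by auto
    then show "y \<in> items K pr" using U0I by blast
  qed
  define A where "A = {x\<in>assign K pr. fst x \<in> U0}"
  have Aimg: "A = (\<lambda>i. (usr pr i, slt pr i)) ` {..<k0}"
  proof
    show "(\<lambda>i. (usr pr i, slt pr i)) ` {..<k0} \<subseteq> A"
    proof
      fix x assume "x \<in> (\<lambda>i. (usr pr i, slt pr i)) ` {..<k0}"
      then obtain i where i: "i < k0" "x = (usr pr i, slt pr i)" by auto
      have iP: "i < card P" and iS: "i < card SL" using i k0P by auto
      have u: "usr pr i \<in> U0" using U0img i by auto
      have s: "slt pr i \<in> WR pr" unfolding WR_def using slt[OF iS, of pr] i nk by auto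
      have "ur pr (items K pr) (usr pr i) = i" using ur_items[OF u] usr(2)[OF v] iP P_def by simp
      then have "(usr pr i, slt pr i) \<in> assign K pr"
        unfolding assign_eq[OF v] using U0I u s slt(2)[OF iS, of pr] by auto
      then show "x \<in> A" using A_def i u by simp
    qed
    show "A \<subseteq> (\<lambda>i. (usr pr i, slt pr i)) ` {..<k0}"
    proof
      fix x assume x: "x \<in> A"
      obtain p b where pb: "x = (p,b)" by (cases x)
      have p: "p \<in> U0" and a: "(p,b) \<in> assign K pr" using x pb A_def by auto
      define i where "i = ur pr P p"
      have i: "i < k0" using p U0_def i_def by auto
      have pu: "usr pr i = p" using usr_unique[OF v] p U0_def i_def P_def by auto
      have b: "b \<in> WR pr" "ur pr (items K pr) p = rnkf (skey pr) SL b" using a assign_eq[OF v] by auto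
      then have "rnkf (skey pr) SL b = i" using ur_items[OF p] i_def by simp
      then have "slt pr i = b" using slt_unique[of b pr] b(1) WR_sub by auto
      then show "x \<in> (\<lambda>i. (usr pr i, slt pr i)) ` {..<k0}" using pb pu i by auto
    qed
  qed
  have injA: "inj_on (\<lambda>i. (usr pr i, slt pr i)) {..<k0}"
    using inj_usr[OF v] k0P P_def unfolding inj_on_def by (metis prod.inject)
  have finA: "finite (assign K pr)"
  proof -
    have "assign K pr \<subseteq> items K pr \<times> SL" using assign_eq[OF v] WR_sub by auto
    then show ?thesis using fin_items[OF v] finSL finite_subset by (metis finite_SigmaI)
  qed
  have gain: "0 \<le> vt (fst (snd x)) - c (fst x)" if x: "x \<in> assign K pr" for x
  proof -
    obtain p b where pb: "x = (p,b)" by (cases x)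
    have pi: "p \<in> items K pr" and bw: "b \<in> WR pr" using x pb assign_eq[OF v] by auto
    have "b \<in> SL" using WR_sub[of pr] bw by blast
    then have "p \<in> Us K" "fst b \<in> As K" using pi IP tf(1) P_def SL_iff by auto
    moreover have "rc pr p \<le> rv pr (fst b)" by (rule gain_nonneg[OF v]) (use x pb in simp)
    ultimately show ?thesis using pb tf by simp
  qed
  have Aeq: "A = assign K pr \<inter> {x. fst x \<in> U0}" unfolding A_def by auto
  have "gft c vt (assign K pr) = gft c vt A + gft c vt (assign K pr - {x. fst x \<in> U0})"
    unfolding gft_def Aeq by (rule sum.Int_Diff[OF finA])
  moreover have "0 \<le> gft c vt (assign K pr - {x. fst x \<in> U0})" unfolding gft_def using gain by (intro sum_nonneg) auto
  moreover have "gft c vt A = sum (gi pr) {..<k0}"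
  proof -
    have "gft c vt A = (\<Sum>i<k0. vt (fst (slt pr i)) - c (usr pr i))"
      unfolding gft_def Aimg by (subst sum.reindex[OF injA]) simp
    also have "\<dots> = sum (gi pr) {..<k0}"
    proof (rule sum.cong)
      fix i assume "i \<in> {..<k0}"
      then have iP: "i < card P" and iS: "i < card SL" using k0P by auto
      have "usr pr i \<in> Us K" using usr(1)[OF v] iP tf(1) P_def by auto
      moreover have "fst (slt pr i) \<in> As K" using slt(1)[OF iS, of pr] SL_iff by auto
      ultimately show "vt (fst (slt pr i)) - c (usr pr i) = gi pr i" unfolding gi_def using tf by simp
    qed simp
    finally show ?thesis .
  qed
  ultimately show ?thesis using k0_def \<tau>_def P_def by simp
qed

lemma competitive_prof:
  assumes v: "valid_prof K pr" and tm: "\<forall>m\<in>Ms K. truthful_med K c pr m"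
    and ta: "\<forall>a\<in>As K. truthful_adv vt pr a"
  shows "(1 - real (5 * g) / real (Lc pr (rP pr))) * opt_gft K c vt \<le> gft c vt (assign K pr)"
proof -
  note tf = truthful_facts[OF v tm ta]
  define \<tau> where "\<tau> = Lc pr (rP pr)"
  have finF: "finite {S. is_assignment K S}"
  proof -
    have "{S. is_assignment K S} \<subseteq> Pow (Us K \<times> SL)" unfolding is_assignment_def by auto
    then show ?thesis using finU finSL finite_subset by (metis finite_Pow_iff finite_SigmaI)
  qed
  have e: "is_assignment K {}" unfolding is_assignment_def by simp
  have opt0: "0 \<le> opt_gft K c vt"
    unfolding opt_gft_def using e finF by (intro Max_ge_iff[THEN iffD2]) (auto simp: gft_def intro!: bexI[of _ "{}"])
  have optle: "opt_gft K c vt \<le> sum (gi pr) {..<\<tau>}"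
    unfolding opt_gft_def \<tau>_def using e finF opt_le[OF v tm ta] by (subst Max_le_iff) auto
  have g0: "0 \<le> gft c vt (assign K pr)"
  proof -
    have "0 \<le> vt (fst (snd x)) - c (fst x)" if x: "x \<in> assign K pr" for x
    proof -
      obtain p b where pb: "x = (p,b)" by (cases x)
      have pi: "p \<in> items K pr" and bw: "b \<in> WR pr" using x pb assign_eq[OF v] by auto
      have "b \<in> SL" using WR_sub[of pr] bw by blast
      then have "p \<in> Us K" "fst b \<in> As K" using pi items_sub tf(1) SL_iff by auto
      moreover have "rc pr p \<le> rv pr (fst b)" by (rule gain_nonneg[OF v]) (use x pb in simp)
    ultimately show ?thesis using pb tf by simp
    qed
    then show ?thesis unfolding gft_def by (intro sum_nonneg) auto
  qed
  have main: "(1 - real (5 * g) / real \<tau>) * opt_gft K c vt \<le> gft c vt (assign K pr)"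
  proof (cases "\<tau> = 0")
    case True
    then show ?thesis using optle g0 by simp
  next
    case False
    show ?thesis
    proof (cases "5 * g < \<tau>")
      case False
      then have "1 - real (5 * g) / real \<tau> \<le> 0" using \<open>\<tau> \<noteq> 0\<close> by (simp add: field_simps)
      then have "(1 - real (5 * g) / real \<tau>) * opt_gft K c vt \<le> 0" using opt0 by (simp add: mult_nonpos_nonneg)
      then show ?thesis using g0 by simp
    next
      case True
      define k0 where "k0 = \<tau> - 5 * g"
      have r: "1 - real (5 * g) / real \<tau> = real k0 / real \<tau>"
        using True \<open>\<tau> \<noteq> 0\<close> k0_def by (simp add: field_simps of_nat_diff)
      have r0: "0 \<le> real k0 / real \<tau>" by simp
      have "(real k0 / real \<tau>) * opt_gft K c vt \<le> (real k0 / real \<tau>) * sum (gi pr) {..<\<tau>}"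
        using optle r0 by (rule mult_left_mono)
      also have "\<dots> \<le> sum (gi pr) {..<k0}"
      proof -
        have "real k0 * sum (gi pr) {..<\<tau>} \<le> real \<tau> * sum (gi pr) {..<k0}"
          using avg_lemma[of \<tau> "gi pr" k0] gi_anti[OF v] \<tau>_def k0_def by auto
        then show ?thesis using \<open>\<tau> \<noteq> 0\<close> by (simp add: field_simps)
      qed
      also have "\<dots> \<le> gft c vt (assign K pr)" using assign_ge[OF v tm ta] True k0_def \<tau>_def by simp
      finally show ?thesis using r by simp
    qed
  qed
  then show ?thesis unfolding \<tau>_def .
qed

end

theorem theorem1:
  fixes K :: "('u,'m,'a) mkt" and c :: "'u \<Rightarrow> real" and v :: "'a \<Rightarrow> real"
  assumes "wf_mkt K"
    and "1 \<le> gam K"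
    and "\<forall>a\<in>As K. cap K a \<le> gam K"
    and "\<forall>m\<in>Ms K. card (usersof K m) \<le> gam K"
    and "\<forall>p\<in>Us K. 0 \<le> c p"
    and "\<forall>a\<in>As K. 0 \<le> v a"
  shows "budget_balanced K \<and> individually_rational K c v \<and> incentive_compatible K c v \<and>
         competitive K c v (\<lambda>pr. 1 - real (5 * gam K) /
                  real (card (canon K pr (rP pr) (slots K (As K)))))"
proof -
  interpret mk K using assms(1-4) by unfold_locales
  have BB: "budget_balanced K" unfolding budget_balanced_def using BB_prof by blast
  have IR: "individually_rational K c v" unfolding individually_rational_def
    using adv_IR med_IR unfolding truthful_adv_def by blast
  have IC: "incentive_compatible K c v" unfolding incentive_compatible_def
    using adv_IC med_IC by blast
  have CO: "competitive K c v (\<lambda>pr. 1 - real (5 * gam K) / real (card (canon K pr (rP pr) (slots K (As K)))))"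
    unfolding competitive_def using competitive_prof by blast
  show ?thesis using BB IR IC CO by blast
qed

end
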